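(* Let $\lambda$ be a partition of $n$. Then $$\sum_{\pi\in S_\lambda} q^{\mathrm{maj}(\pi)}t^{\mathrm{des}(\pi)}=\sum_{\nu\trianglerighteq\lambda}K_{\nu\lambda}\sum_{T\in\mathrm{QYT}(\nu)}q^{\mathrm{maj}(T)}t^{\mathrm{des}(T)},$$ where $\nu$ ranges over partitions of $n$ dominating $\lambda$.
   Context: $S_\lambda$ is the set of multiset permutations (words) of the multiset $\{1^{\lambda_1},2^{\lambda_2},\dots\}$; for a word $\pi=\pi_1\cdots\pi_n$, $\mathrm{Des}(\pi)=\{i:\pi_i>\pi_{i+1}\}$, $\mathrm{des}(\pi)=|\mathrm{Des}(\pi)|$, $\mathrm{maj}(\pi)=\sum_{i\in\mathrm{Des}(\pi)}i$. $\nu\trianglerighteq\lambda$ means $\nu_1+\cdots+\nu_i\ge\lambda_1+\cdots+\lambda_i$ for all $i$. $K_{\nu\lambda}$ is the Kostka number (number of semistandard Young tableaux of shape $\nu$ and weight $\lambda$). Tableaux are in French convention. For a standard Young tableau $T$, $\mathrm{Des}(T)=\{i: i+1$ lies in a strictly higher row than $i\}$, and $\mathrm{des},\mathrm{maj}$ are defined as for words. A quasi-Yamanouchi tableau (QYT) is a semistandard Young tableau such that whenever an entry $i\ge2$ appears, some instance of $i$ lies in a strictly higher row than some instance of $i-1$; $\mathrm{QYT}(\nu)$ is the set of QYT of shape $\nu$. Standardization (replace the $1$'s by $1,2,\dots$ left to right, then the $2$'s by the next integers left to right, etc.) is a bijection from $\mathrm{QYT}(\nu)$ to standard Young tableaux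 of shape $\nu$; $\mathrm{maj},\mathrm{des}$ of a QYT are those of its standardization. *)

theory Defs
  imports Main "HOL-Library.Multiset"
begin

definition partitions_of :: "nat \<Rightarrow> nat list set" where
  "partitions_of n = {nu. sorted_wrt (\<ge>) nu \<and> 0 \<notin> set nu \<and> sum_list nu = n}"

definition dominates :: "nat list \<Rightarrow> nat list \<Rightarrow> bool" where
  "dominates nu la \<longleftrightarrow> (\<forall>i. sum_list (take i la) \<le> sum_list (take i nu))"

definition words :: "nat list \<Rightarrow> nat list set" where
  "words la = {w. mset w = (\<Sum>i<length la. replicate_mset (la ! i) (Suc i))}"

text \<open>Descent set of a word, positions 1-indexed.\<close>
definition word_Des :: "nat list \<Rightarrow> nat set" where
  "word_Des w = {i. 1 \<le> i \<and> i < length w \<and> w ! (i - 1) > w ! i}"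

definition word_des :: "nat list \<Rightarrow> nat" where
  "word_des w = card (word_Des w)"

definition word_maj :: "nat list \<Rightarrow> nat" where
  "word_maj w = \<Sum>(word_Des w)"

text \<open>Young diagram in French convention: cell (r,c) = row r (row 0 at the bottom,
  larger r is higher), column c, both 0-indexed.\<close>
definition cells :: "nat list \<Rightarrow> (nat \<times> nat) set" where
  "cells nu = {(r, c). r < length nu \<and> c < nu ! r}"

text \<open>A tableau is a filling of the cells (value 0 outside the shape).\<close>
definition ssyt :: "nat list \<Rightarrow> (nat \<times> nat \<Rightarrow> nat) \<Rightarrow> bool" where
  "ssyt nu T \<longleftrightarrow>
     (\<forall>x. x \<notin> cells nu \<longrightarrow> T x = 0) \<and>
     (\<forall>x\<in>cells nu. 1 \<le> T x) \<and>
     (\<forall>r c. (r, Suc c) \<in> cells nu \<longrightarrow> T (r, c) \<le> T (r, Suc c)) \<and>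
     (\<forall>r c. (Suc r, c) \<in> cells nu \<longrightarrow> T (r, c) < T (Suc r, c))"

definition has_weight :: "nat list \<Rightarrow> nat list \<Rightarrow> (nat \<times> nat \<Rightarrow> nat) \<Rightarrow> bool" where
  "has_weight nu la T \<longleftrightarrow>
     (\<forall>k. card {x \<in> cells nu. T x = k} = (if 1 \<le> k \<and> k \<le> length la then la ! (k - 1) else 0))"

definition kostka :: "nat list \<Rightarrow> nat list \<Rightarrow> nat" where
  "kostka nu la = card {T. ssyt nu T \<and> has_weight nu la T}"

definition qyt :: "nat list \<Rightarrow> (nat \<times> nat \<Rightarrow> nat) \<Rightarrow> bool" where
  "qyt nu T \<longleftrightarrow> ssyt nu T \<and>
     (\<forall>i\<ge>2. (\<exists>x\<in>cells nu. T x = i) \<longrightarrow>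
        (\<exists>x\<in>cells nu. \<exists>y\<in>cells nu. T x = i \<and> T y = i - 1 \<and> fst x > fst y))"

definition QYT :: "nat list \<Rightarrow> (nat \<times> nat \<Rightarrow> nat) set" where
  "QYT nu = {T. qyt nu T}"

definition standardize :: "nat list \<Rightarrow> (nat \<times> nat \<Rightarrow> nat) \<Rightarrow> (nat \<times> nat \<Rightarrow> nat)" where
  "standardize nu T = (\<lambda>x. if x \<in> cells nu then
      Suc (card {y \<in> cells nu. T y < T x \<or> (T y = T x \<and> snd y < snd x)}) else 0)"

definition syt_Des :: "nat list \<Rightarrow> (nat \<times> nat \<Rightarrow> nat) \<Rightarrow> nat set" where
  "syt_Des nu S = {i. 1 \<le> i \<and>
     (\<exists>x\<in>cells nu. \<exists>y\<in>cells nu. S x = i \<and> S y = Suc i \<and> fst y > fst x)}"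

definition tab_des :: "nat list \<Rightarrow> (nat \<times> nat \<Rightarrow> nat) \<Rightarrow> nat" where
  "tab_des nu T = card (syt_Des nu (standardize nu T))"

definition tab_maj :: "nat list \<Rightarrow> (nat \<times> nat \<Rightarrow> nat) \<Rightarrow> nat" where
  "tab_maj nu T = \<Sum>(syt_Des nu (standardize nu T))"

end

theory Submission
  imports Defs
begin


definition pos :: "nat \<Rightarrow> nat list \<Rightarrow> nat" where
  "pos x r = length (takeWhile (\<lambda>z. z \<le> x) r)"

definition rpos :: "nat \<Rightarrow> nat list \<Rightarrow> nat" where
  "rpos y r = length (takeWhile (\<lambda>z. z < y) r)"

lemma pos_le: "pos x r \<le> length r"
  unfolding pos_def by (rule length_takeWhile_le)

lemma rpos_le: "rpos x r \<le> length r"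
  unfolding rpos_def by (rule length_takeWhile_le)

lemma takeWhile_len_iff:
  assumes "sorted r" "k < length r" "\<And>a b. a \<le> b \<Longrightarrow> P b \<Longrightarrow> P a"
  shows "k < length (takeWhile P r) \<longleftrightarrow> P (r ! k)"
proof
  assume "k < length (takeWhile P r)"
  then have "takeWhile P r ! k \<in> set (takeWhile P r)" by (rule nth_mem)
  then show "P (r ! k)" using takeWhile_nth[OF \<open>k < length (takeWhile P r)\<close>]
    by (metis set_takeWhileD)
next
  assume "P (r ! k)"
  have "Suc k \<le> length (takeWhile P r)"
  proof (rule length_takeWhile_less_P_nth)
    fix i assume "i < Suc k"
    then have "r ! i \<le> r ! k" using assms(1,2) by (intro sorted_nth_mono) auto
    then show "P (r ! i)" using assms(3) \<open>P (r ! k)\<close> by blast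
  qed (use assms in simp)
  then show "k < length (takeWhile P r)" by simp
qed

lemma pos_lt_iff: "sorted r \<Longrightarrow> k < length r \<Longrightarrow> k < pos x r \<longleftrightarrow> r ! k \<le> x"
  unfolding pos_def by (rule takeWhile_len_iff) auto

lemma rpos_lt_iff: "sorted r \<Longrightarrow> k < length r \<Longrightarrow> k < rpos y r \<longleftrightarrow> r ! k < y"
  unfolding rpos_def by (rule takeWhile_len_iff) auto

fun sb :: "nat list \<Rightarrow> nat list \<Rightarrow> bool" where
  "sb _ [] = True"
| "sb [] (b # bs) = False"
| "sb (a # as) (b # bs) = (a < b \<and> sb as bs)"

lemma sb_iff: "sb r s \<longleftrightarrow> length s \<le> length r \<and> (\<forall>k<length s. r ! k < s ! k)"
proof (induction r s rule: sb.induct)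
  case (3 a as b bs)
  then show ?case
    by (auto simp: nth_Cons' split: if_splits)
qed auto

definition valid :: "nat list list \<Rightarrow> bool" where
  "valid P \<longleftrightarrow> (\<forall>r\<in>set P. sorted r \<and> r \<noteq> []) \<and> (\<forall>i. Suc i < length P \<longrightarrow> sb (P ! i) (P ! Suc i))"

lemma valid_Nil[simp]: "valid []"
  by (simp add: valid_def)

lemma valid_Cons: "valid (r # rs) \<longleftrightarrow> sorted r \<and> r \<noteq> [] \<and> (rs \<noteq> [] \<longrightarrow> sb r (hd rs)) \<and> valid rs"
  unfolding valid_def
  apply (auto simp: nth_Cons' hd_conv_nth split: if_splits)
  apply (metis Suc_less_eq Suc_pred bot_nat_0.not_eq_extremum)
  done

fun ins :: "nat \<Rightarrow> nat list list \<Rightarrow> nat list list" where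
  "ins x [] = [[x]]"
| "ins x (r # rs) = (if pos x r = length r then (r @ [x]) # rs
                     else r[pos x r := x] # ins (r ! pos x r) rs)"

fun irow :: "nat \<Rightarrow> nat list list \<Rightarrow> nat" where
  "irow x [] = 0"
| "irow x (r # rs) = (if pos x r = length r then 0 else Suc (irow (r ! pos x r) rs))"

fun revins :: "nat list list \<Rightarrow> nat \<Rightarrow> nat list list \<times> nat" where
  "revins [] i = ([], 0)"
| "revins (r # rs) 0 = ((if butlast r = [] then rs else butlast r # rs), last r)"
| "revins (r # rs) (Suc i) = (case revins rs i of (rs', y) \<Rightarrow>
      (r[rpos y r - 1 := y] # rs', r ! (rpos y r - 1)))"

lemma sorted_app_pos:
  assumes "sorted r" "pos x r = length r"
  shows "sorted (r @ [x])"
proof -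
  have "\<forall>z\<in>set r. z \<le> x"
    using assms pos_lt_iff[OF assms(1)] by (metis in_set_conv_nth)
  then show ?thesis using assms(1) by (simp add: sorted_append)
qed

lemma sorted_upd_pos:
  assumes "sorted r" "pos x r < length r"
  shows "sorted (r[pos x r := x])"
  unfolding sorted_iff_nth_mono
proof (intro allI impI)
  fix i j assume ij: "i \<le> j" "j < length (r[pos x r := x])"
  let ?c = "pos x r"
  have lt: "\<And>k. k < length r \<Longrightarrow> k < ?c \<longleftrightarrow> r ! k \<le> x" using pos_lt_iff[OF assms(1)] by blast
  have m: "\<And>a b. a \<le> b \<Longrightarrow> b < length r \<Longrightarrow> r ! a \<le> r ! b" using assms(1) sorted_nth_mono by blast
  show "r[?c := x] ! i \<le> r[?c := x] ! j"
    using ij lt m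
  proof (cases "i = ?c")
    case True
    then show ?thesis
    proof (cases "j = ?c")
      case False
      then have "?c < j" using True ij by simp
      then have "\<not> j < ?c" by simp
      then have "x < r ! j" using lt[of j] ij by simp
      then show ?thesis using True False ij by simp
    qed simp
  next
    case False
    then show ?thesis
    proof (cases "j = ?c")
      case True
      then have "i < ?c" using False ij by simp
      then have "r ! i \<le> x" using lt[of i] ij by simp
      then show ?thesis using True False ij by simp
    next
      case False2: False
      then show ?thesis using False ij m by simp
    qed
  qed
qed


lemma eq_from_iff:
  fixes a b L :: nat
  assumes "a \<le> L" "b \<le> L" "\<And>k. k < L \<Longrightarrow> (k < a \<longleftrightarrow> k < b)"
  shows "a = b"
proof (rule ccontr)
  assume "a \<noteq> b"
  then have "min a b < L" "min a b < max a b" using assms(1,2) by auto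
  then show False using assms(3)[of "min a b"] by (auto simp: min_def max_def split: if_splits)
qed

lemma pos_facts:
  assumes "sorted r" "pos x r < length r"
  shows "x < r ! pos x r" "\<And>k. k < pos x r \<Longrightarrow> r ! k \<le> x"
    "\<And>k. pos x r \<le> k \<Longrightarrow> k < length r \<Longrightarrow> x < r ! k"
proof -
  show "x < r ! pos x r" using pos_lt_iff[OF assms(1) assms(2), of x] by simp
  show "\<And>k. k < pos x r \<Longrightarrow> r ! k \<le> x"
    using pos_lt_iff[OF assms(1)] assms(2) by (meson order.strict_trans)
  show "\<And>k. pos x r \<le> k \<Longrightarrow> k < length r \<Longrightarrow> x < r ! k"
    using pos_lt_iff[OF assms(1)] by (meson not_le)
qed

lemma pos_full: "sorted r \<Longrightarrow> pos x r = length r \<Longrightarrow> k < length r \<Longrightarrow> r ! k \<le> x"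
  using pos_lt_iff[of r k x] by simp

lemma K1:
  assumes r: "sorted r" and s: "sorted s" and rs: "sb r s" and c: "pos x r < length r"
  shows "sb (r[pos x r := x]) (if pos (r ! pos x r) s = length s then s @ [r ! pos x r]
            else s[pos (r ! pos x r) s := r ! pos x r])"
proof -
  define c where "c = pos x r"
  define y where "y = r ! c"
  define d where "d = pos y s"
  have cl: "c < length r" using c c_def by simp
  have xy: "x < y" using pos_facts(1)[OF r c] unfolding y_def c_def .
  have below: "\<And>k. k < c \<Longrightarrow> r ! k \<le> x" using pos_facts(2)[OF r c] c_def by simp
  have rsi: "length s \<le> length r" "\<And>k. k < length s \<Longrightarrow> r ! k < s ! k" using rs sb_iff by auto
  have dle: "d \<le> c"
  proof (cases "c < length s")
    case True
    then have "y < s ! c" using rsi(2) y_def by simp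
    then have "\<not> c < d" using pos_lt_iff[OF s True, of y] d_def by simp
    then show ?thesis by simp
  next
    case False
    then show ?thesis using pos_le[of y s] d_def by simp
  qed
  have sabove: "\<And>k. d \<le> k \<Longrightarrow> k < length s \<Longrightarrow> y < s ! k"
    using pos_lt_iff[OF s] d_def by (meson not_less)
  show ?thesis
    unfolding c_def[symmetric] y_def[symmetric] d_def[symmetric]
  proof (cases "d = length s")
    case True
    have "sb (r[c := x]) (s @ [y])"
      unfolding sb_iff
    proof (intro conjI allI impI)
      show "length (s @ [y]) \<le> length (r[c := x])" using True dle cl by simp
      fix k assume k: "k < length (s @ [y])"
      show "r[c := x] ! k < (s @ [y]) ! k"
      proof (cases "k = length s")
        case True
        then show ?thesis using below[of k] dle \<open>d = length s\<close> xy cl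
          by (cases "k = c") (auto simp: nth_append)
      next
        case False
        then have "k < length s" using k by simp
        moreover have "k \<noteq> c" using \<open>k < length s\<close> dle True by simp
        ultimately show ?thesis using rsi by (simp add: nth_append)
      qed
    qed
    then show "sb (r[c := x]) (if d = length s then s @ [y] else s[d := y])" using True by simp
  next
    case False
    then have dl: "d < length s" using pos_le[of y s] d_def by simp
    have "sb (r[c := x]) (s[d := y])"
      unfolding sb_iff
    proof (intro conjI allI impI)
      show "length (s[d := y]) \<le> length (r[c := x])" using rsi by simp
      fix k assume k: "k < length (s[d := y])"
      show "r[c := x] ! k < s[d := y] ! k"
      proof (cases "k = d")
        case True
        then show ?thesis using below[of k] dle xy cl dl by (cases "k = c") auto
      next
        case False
        have "k < length s" using k by simp
        show ?thesis
        proof (cases "k = c")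
          case True
          then have "y < s ! c" using rsi(2) y_def \<open>k < length s\<close> by simp
          then show ?thesis using True False xy cl by simp
        next
          case False2: False
          then show ?thesis using False rsi(2) \<open>k < length s\<close> by simp
        qed
      qed
    qed
    then show "sb (r[c := x]) (if d = length s then s @ [y] else s[d := y])" using False by simp
  qed
qed

lemma sb_app: "sb r s \<Longrightarrow> sb (r @ [x]) s"
  by (auto simp: sb_iff nth_append)

lemma ins_Cons_hd: "hd (ins y (s # ss)) = (if pos y s = length s then s @ [y] else s[pos y s := y])"
  by simp

lemma ins_valid: "valid P \<Longrightarrow> valid (ins x P)"
proof (induction P arbitrary: x)
  case Nil
  then show ?case by (simp add: valid_Cons)
next
  case (Cons r rs)
  have r: "sorted r" "r \<noteq> []" and rrs: "rs \<noteq> [] \<Longrightarrow> sb r (hd rs)" and vrs: "valid rs"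
    using Cons.prems by (auto simp: valid_Cons)
  show ?case
  proof (cases "pos x r = length r")
    case True
    then show ?thesis using r rrs vrs sorted_app_pos[OF r(1) True] sb_app
      by (simp add: valid_Cons)
  next
    case False
    then have c: "pos x r < length r" using pos_le[of x r] by simp
    let ?y = "r ! pos x r"
    have v2: "valid (ins ?y rs)" using Cons.IH vrs by simp
    have s2: "sorted (r[pos x r := x])" using sorted_upd_pos[OF r(1) c] .
    have sbh: "sb (r[pos x r := x]) (hd (ins ?y rs))"
    proof (cases rs)
      case Nil
      have "r[pos x r := x] ! 0 < ?y"
        using pos_facts(1)[OF r(1) c] pos_facts(2)[OF r(1) c, of 0] c by (cases "pos x r = 0") auto
      then show ?thesis using Nil c by (simp add: sb_iff)
    next
      case (Cons s ss)
      have "sorted s" using vrs Cons by (simp add: valid_Cons)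
      moreover have "sb r s" using rrs Cons by simp
      ultimately have "sb (r[pos x r := x]) (if pos ?y s = length s then s @ [?y] else s[pos ?y s := ?y])"
        using K1[OF r(1) _ _ c] by blast
      then show ?thesis using Cons by (simp del: ins.simps add: ins_Cons_hd)
    qed
    show ?thesis using False s2 sbh v2 c r(2) by (simp add: valid_Cons)
  qed
qed

definition addcell :: "nat list \<Rightarrow> nat \<Rightarrow> nat list" where
  "addcell nu i = (if i < length nu then nu[i := Suc (nu ! i)] else nu @ [1])"

lemma ins_shape: "map length (ins x P) = addcell (map length P) (irow x P) \<and> irow x P \<le> length P"
proof (induction P arbitrary: x)
  case Nil
  then show ?case by (simp add: addcell_def)
next
  case (Cons r rs)
  show ?case
  proof (cases "pos x r = length r")
    case True
    then show ?thesis by (simp add: addcell_def)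
  next
    case False
    have "map length (ins (r ! pos x r) rs) = addcell (map length rs) (irow (r ! pos x r) rs)"
      "irow (r ! pos x r) rs \<le> length rs" using Cons.IH by auto
    then show ?thesis using False by (auto simp: addcell_def)
  qed
qed

lemma ins_mset: "mset (concat (ins x P)) = add_mset x (mset (concat P))"
proof (induction P arbitrary: x)
  case Nil
  then show ?case by simp
next
  case (Cons r rs)
  show ?case
  proof (cases "pos x r = length r")
    case True
    then show ?thesis by simp
  next
    case False
    then have c: "pos x r < length r" using pos_le[of x r] by simp
    have "mset (r[pos x r := x]) = add_mset x (mset r - {#r ! pos x r#})"
      using mset_update[OF c] .
    moreover have "r ! pos x r \<in># mset r" using c by simp
    ultimately show ?thesis using False Cons.IH
      by (simp add: insert_DiffM)
  qed
qed


lemma rpos_after: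
  assumes r: "sorted r" and c: "pos x r < length r"
  shows "rpos (r ! pos x r) (r[pos x r := x]) = Suc (pos x r)"
proof -
  let ?c = "pos x r" let ?y = "r ! ?c" let ?r = "r[?c := x]"
  have s: "sorted ?r" using sorted_upd_pos[OF r c] .
  show ?thesis
  proof (rule eq_from_iff[of _ "length r"])
    show "rpos ?y ?r \<le> length r" using rpos_le[of ?y ?r] by simp
    show "Suc ?c \<le> length r" using c by simp
    fix k assume k: "k < length r"
    have "k < rpos ?y ?r \<longleftrightarrow> ?r ! k < ?y" using rpos_lt_iff[OF s, of k ?y] k by simp
    also have "\<dots> \<longleftrightarrow> k < Suc ?c"
    proof (cases "k = ?c")
      case True
      then show ?thesis using pos_facts(1)[OF r c] c by simp
    next
      case False
      show ?thesis
      proof (cases "k < ?c")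
        case True
        then show ?thesis using pos_facts(1,2)[OF r c] False by (simp, meson le_less_trans)
      next
        case False2: False
        then have "?c < k" using False by simp
        then have "?y \<le> r ! k" using r k by (intro sorted_nth_mono) auto
        then show ?thesis using False False2 by simp
      qed
    qed
    finally show "k < rpos ?y ?r \<longleftrightarrow> k < Suc ?c" .
  qed
qed

lemma I1: "valid P \<Longrightarrow> revins (ins x P) (irow x P) = (P, x)"
proof (induction P arbitrary: x)
  case Nil
  then show ?case by simp
next
  case (Cons r rs)
  have r: "sorted r" "r \<noteq> []" and vrs: "valid rs" using Cons.prems by (auto simp: valid_Cons)
  show ?case
  proof (cases "pos x r = length r")
    case True
    then show ?thesis using r by simp
  next
    case False
    then have c: "pos x r < length r" using pos_le[of x r] by simp
    have ih: "revins (ins (r ! pos x r) rs) (irow (r ! pos x r) rs) = (rs, r ! pos x r)"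
      using Cons.IH vrs by simp
    show ?thesis using False ih rpos_after[OF r(1) c] c by simp
  qed
qed

definition corner :: "nat list list \<Rightarrow> nat \<Rightarrow> bool" where
  "corner P i \<longleftrightarrow> i < length P \<and> (Suc i < length P \<longrightarrow> length (P ! Suc i) < length (P ! i))"

lemma rpos_facts:
  assumes r: "sorted r" and p: "0 < rpos y r"
  shows "rpos y r - 1 < length r" "r ! (rpos y r - 1) < y"
    "\<And>k. k < rpos y r - 1 \<Longrightarrow> r ! k \<le> r ! (rpos y r - 1)"
    "\<And>k. rpos y r - 1 < k \<Longrightarrow> k < length r \<Longrightarrow> y \<le> r ! k"
proof -
  show l: "rpos y r - 1 < length r" using rpos_le[of y r] p by simp
  show "r ! (rpos y r - 1) < y" using rpos_lt_iff[OF r l, of y] p by simp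
  show "\<And>k. k < rpos y r - 1 \<Longrightarrow> r ! k \<le> r ! (rpos y r - 1)"
    using r l by (intro sorted_nth_mono) auto
  show "\<And>k. rpos y r - 1 < k \<Longrightarrow> k < length r \<Longrightarrow> y \<le> r ! k"
  proof -
    fix k assume k: "rpos y r - 1 < k" "k < length r"
    then have "\<not> k < rpos y r" using p by simp
    then show "y \<le> r ! k" using rpos_lt_iff[OF r k(2), of y] by simp
  qed
qed

lemma sorted_upd_rpos:
  assumes r: "sorted r" and p: "0 < rpos y r"
  shows "sorted (r[rpos y r - 1 := y])"
  unfolding sorted_iff_nth_mono
proof (intro allI impI)
  fix i j assume ij: "i \<le> j" "j < length (r[rpos y r - 1 := y])"
  let ?c = "rpos y r - 1"
  note f = rpos_facts[OF r p]
  have m: "\<And>a b. a \<le> b \<Longrightarrow> b < length r \<Longrightarrow> r ! a \<le> r ! b" using r sorted_nth_mono by blast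
  show "r[?c := y] ! i \<le> r[?c := y] ! j"
  proof (cases "i = ?c")
    case True
    then show ?thesis
    proof (cases "j = ?c")
      case False
      then have "?c < j" using True ij by simp
      then show ?thesis using True False ij f(4)[of j] by simp
    qed simp
  next
    case False
    then show ?thesis
    proof (cases "j = ?c")
      case True
      then have "i < ?c" using False ij by simp
      then have "r ! i \<le> r ! ?c" using f(3) by simp
      then show ?thesis using True False ij f(2) by simp
    next
      case False2: False
      then show ?thesis using False ij m by simp
    qed
  qed
qed

lemma K2:
  assumes r: "sorted r" and s': "sorted s'" and rs: "sb r s"
    and sdef: "s = (if pos y s' = length s' then s' @ [y] else s'[pos y s' := y])"
  shows "0 < rpos y r" "sb (r[rpos y r - 1 := y]) s'"
proof -
  define d where "d = pos y s'"
  have dl: "d < length s" "s ! d = y" using sdef pos_le[of y s'] d_def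
    by (auto simp: nth_append)
  have rsi: "length s \<le> length r" "\<And>k. k < length s \<Longrightarrow> r ! k < s ! k" using rs sb_iff by auto
  have rd: "r ! d < y" using rsi(2)[OF dl(1)] dl(2) by simp
  have "d < rpos y r" using rpos_lt_iff[OF r, of d y] rd dl(1) rsi(1) by simp
  then show p: "0 < rpos y r" by simp
  define c where "c = rpos y r - 1"
  note f = rpos_facts[OF r p, folded c_def]
  have dc: "d \<le> c" using \<open>d < rpos y r\<close> c_def by simp
  have above: "\<And>k. d \<le> k \<Longrightarrow> k < length s' \<Longrightarrow> y < s' ! k"
    using pos_lt_iff[OF s'] d_def by (meson not_less)
  have sk: "\<And>k. k < length s' \<Longrightarrow> k \<noteq> d \<Longrightarrow> s ! k = s' ! k"
    using sdef d_def by (auto simp: nth_append)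
  have ls: "length s' \<le> length s" using sdef by auto
  show "sb (r[rpos y r - 1 := y]) s'"
    unfolding c_def[symmetric] sb_iff
  proof (intro conjI allI impI)
    show "length s' \<le> length (r[c := y])" using ls rsi by simp
    fix k assume k: "k < length s'"
    show "r[c := y] ! k < s' ! k"
    proof (cases "k = c")
      case True
      then show ?thesis using above[of k] dc k f(1) by simp
    next
      case False
      show ?thesis
      proof (cases "k = d")
        case True
        then show ?thesis using False rd above[of d] k by simp
      next
        case False2: False
        then show ?thesis using False sk[OF k False2] rsi(2)[of k] k ls by simp
      qed
    qed
  qed
qed

lemma pos_butlast:
  assumes "sorted r" "r \<noteq> []"
  shows "pos (last r) (butlast r) = length (butlast r)"
proof (rule eq_from_iff[of _ "length (butlast r)"])
  show "pos (last r) (butlast r) \<le> length (butlast r)" by (rule pos_le)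
  have sb: "sorted (butlast r)" using assms(1) by (simp add: sorted_butlast)
  fix k assume k: "k < length (butlast r)"
  have "butlast r ! k \<le> last r"
    using assms k by (simp add: nth_butlast last_conv_nth sorted_nth_mono)
  then show "k < pos (last r) (butlast r) \<longleftrightarrow> k < length (butlast r)"
    using pos_lt_iff[OF sb k] k by simp
qed simp

lemma I2: "valid P \<Longrightarrow> corner P i \<Longrightarrow> revins P i = (P', x) \<Longrightarrow>
  valid P' \<and> ins x P' = P \<and> irow x P' = i"
proof (induction P arbitrary: i P' x)
  case Nil
  then show ?case by (simp add: corner_def)
next
  case (Cons r rs)
  have r: "sorted r" "r \<noteq> []" and rrs: "rs \<noteq> [] \<Longrightarrow> sb r (hd rs)" and vrs: "valid rs"
    using Cons.prems by (auto simp: valid_Cons)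
  show ?case
  proof (cases i)
    case 0
    show ?thesis
    proof (cases "butlast r = []")
      case True
      then obtain a where a: "r = [a]" using r(2) by (metis append_butlast_last_id append_Nil)
      have "rs = []"
      proof (rule ccontr)
        assume "rs \<noteq> []"
        then have "length (hd rs) < 1" using Cons.prems(2) 0 a by (simp add: corner_def hd_conv_nth)
        moreover have "hd rs \<noteq> []" using vrs \<open>rs \<noteq> []\<close> by (cases rs) (auto simp: valid_Cons)
        ultimately show False by simp
      qed
      then show ?thesis using Cons.prems(3) 0 a by simp
    next
      case False
      have P': "P' = butlast r # rs" "x = last r" using Cons.prems(3) 0 False by auto
      have pb: "pos (last r) (butlast r) = length (butlast r)" using pos_butlast[OF r] .
      have ins: "ins x P' = r # rs" using P' pb r(2) by simp
      have sbb: "rs \<noteq> [] \<Longrightarrow> sb (butlast r) (hd rs)"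
      proof -
        assume ne: "rs \<noteq> []"
        have "length (hd rs) < length r" using Cons.prems(2) 0 ne by (simp add: corner_def hd_conv_nth)
        then show ?thesis using rrs[OF ne] by (auto simp: sb_iff nth_butlast)
      qed
      have "valid P'" using P' sbb vrs r False by (simp add: valid_Cons sorted_butlast)
      then show ?thesis using ins P' pb 0 by simp
    qed
  next
    case (Suc j)
    have rsne: "rs \<noteq> []" and cj: "corner rs j" using Cons.prems(2) Suc by (auto simp: corner_def)
    obtain rs' y where rv: "revins rs j = (rs', y)" by (cases "revins rs j") auto
    have ih: "valid rs'" "ins y rs' = rs" "irow y rs' = j" using Cons.IH[OF vrs cj rv] by auto
    have P': "P' = r[rpos y r - 1 := y] # rs'" "x = r ! (rpos y r - 1)"
      using Cons.prems(3) Suc rv by auto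
    \<comment> \<open>the row s = hd rs arises by inserting y into hd rs'\<close>
    have key: "0 < rpos y r \<and> (rs' \<noteq> [] \<longrightarrow> sb (r[rpos y r - 1 := y]) (hd rs'))"
    proof (cases rs')
      case Nil
      then have "rs = [[y]]" using ih(2) by simp
      then have "r ! 0 < y" using rrs by (simp add: sb_iff)
      then have "0 < rpos y r" using rpos_lt_iff[OF r(1), of 0 y] r(2) by simp
      then show ?thesis using Nil by simp
    next
      case (Cons s' ss')
      have s': "sorted s'" using ih(1) Cons by (simp add: valid_Cons)
      have hs: "hd rs = (if pos y s' = length s' then s' @ [y] else s'[pos y s' := y])"
        using ih(2) Cons by (metis ins_Cons_hd)
      show ?thesis using K2[OF r(1) s' rrs[OF rsne] hs] Cons by simp
    qed
    define c where "c = rpos y r - 1"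
    note f = rpos_facts[OF r(1) conjunct1[OF key], folded c_def]
    have sr: "sorted (r[c := y])" using sorted_upd_rpos[OF r(1) conjunct1[OF key]] c_def by simp
    have pc: "pos x (r[c := y]) = c"
    proof (rule eq_from_iff[of _ "length r"])
      show "pos x (r[c := y]) \<le> length r" using pos_le[of x "r[c := y]"] by simp
      show "c \<le> length r" using f(1) by simp
      fix k assume k: "k < length r"
      have "k < pos x (r[c := y]) \<longleftrightarrow> r[c := y] ! k \<le> x" using pos_lt_iff[OF sr, of k x] k by simp
      also have "\<dots> \<longleftrightarrow> k < c"
        using f(2) f(3)[of k] f(4)[of k] k P'(2) c_def
        by (cases "k = c"; cases "k < c") (auto simp: not_less)
      finally show "k < pos x (r[c := y]) \<longleftrightarrow> k < c" .
    qed
    have ins: "ins x P' = r # rs"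
      using P' pc f(1) ih(2) c_def[symmetric] by simp
    have irw: "irow x P' = i" using P' pc f(1) ih(3) Suc c_def[symmetric] by simp
    have "valid P'" using P' sr key ih(1) c_def[symmetric] r(2) by (simp add: valid_Cons)
    then show ?thesis using ins irw by simp
  qed
qed

lemma bump:
  "valid P \<Longrightarrow> (x \<le> x' \<longrightarrow> irow x' (ins x P) \<le> irow x P) \<and> (x' < x \<longrightarrow> irow x P < irow x' (ins x P))"
proof (induction P arbitrary: x x')
  case Nil
  have "x \<le> x' \<Longrightarrow> pos x' [x] = 1" unfolding pos_def by simp
  moreover have "x' < x \<Longrightarrow> pos x' [x] = 0" unfolding pos_def by simp
  ultimately show ?case by auto
next
  case (Cons r rs)
  have r: "sorted r" "r \<noteq> []" and vrs: "valid rs" using Cons.prems by (auto simp: valid_Cons)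
  show ?case
  proof (cases "pos x r = length r")
    case True
    have sa: "sorted (r @ [x])" using sorted_app_pos[OF r(1) True] .
    have "x \<le> x' \<Longrightarrow> pos x' (r @ [x]) = length (r @ [x])"
    proof -
      assume xx: "x \<le> x'"
      show ?thesis
      proof (rule eq_from_iff[of _ "length (r @ [x])"])
        fix k assume k: "k < length (r @ [x])"
        have "(r @ [x]) ! k \<le> (r @ [x]) ! length r" using sa k by (intro sorted_nth_mono) auto
        then have "(r @ [x]) ! k \<le> x" by simp
        then show "k < pos x' (r @ [x]) \<longleftrightarrow> k < length (r @ [x])" using pos_lt_iff[OF sa k, of x'] xx k by simp
      qed (use pos_le[of x' "r @ [x]"] in simp_all)
    qed
    moreover have "x' < x \<Longrightarrow> pos x' (r @ [x]) \<noteq> length (r @ [x])"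
    proof
      assume "x' < x" "pos x' (r @ [x]) = length (r @ [x])"
      then have "length r < pos x' (r @ [x])" by simp
      then show False using pos_lt_iff[OF sa, of "length r" x'] \<open>x' < x\<close> by simp
    qed
    ultimately show ?thesis using True by auto
  next
    case False
    then have c: "pos x r < length r" using pos_le[of x r] by simp
    define c' where "c' = pos x r"
    define y where "y = r ! c'"
    define r' where "r' = r[c' := x]"
    have sr': "sorted r'" using sorted_upd_pos[OF r(1) c] r'_def c'_def by simp
    have insP: "ins x (r # rs) = r' # ins y rs" "irow x (r # rs) = Suc (irow y rs)"
      using False r'_def y_def c'_def by auto
    have lr': "length r' = length r" using r'_def by simp
    have r'c: "r' ! c' = x" using r'_def c c'_def by simp
    have xy: "x < y" using pos_facts(1)[OF r(1) c] y_def c'_def by simp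
    show ?thesis
    proof (intro conjI impI)
      assume xx: "x \<le> x'"
      show "irow x' (ins x (r # rs)) \<le> irow x (r # rs)"
      proof (cases "pos x' r' = length r'")
        case True
        then show ?thesis using insP by simp
      next
        case F2: False
        then have c2: "pos x' r' < length r'" using pos_le[of x' r'] by simp
        have "c' < pos x' r'" using pos_lt_iff[OF sr', of c' x'] r'c xx c lr' c'_def by simp
        then have "r ! c' \<le> r ! pos x' r'" using c2 lr' r(1) by (intro sorted_nth_mono) auto
        then have "y \<le> r' ! pos x' r'" using r'_def y_def \<open>c' < pos x' r'\<close> by simp
        then have "irow (r' ! pos x' r') (ins y rs) \<le> irow y rs" using Cons.IH[OF vrs] by blast
        then show ?thesis using insP F2 by simp
      qed
    next
      assume xx: "x' < x"
      have nle: "\<not> pos x' r' \<le> c'"  if "\<not> pos x' r' < length r'" 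
        using that c lr' c'_def by simp
      have c2: "pos x' r' \<le> c'"
      proof (rule ccontr)
        assume "\<not> pos x' r' \<le> c'"
        then have "c' < pos x' r'" by simp
        then show False using pos_lt_iff[OF sr', of c' x'] r'c xx c lr' c'_def by simp
      qed
      then have c2l: "pos x' r' < length r'" using c lr' c'_def by simp
      have "r' ! pos x' r' \<le> r' ! c'" using sr' c2 c lr' c'_def by (intro sorted_nth_mono) auto
      then have "r' ! pos x' r' < y" using r'c xy by simp
      then have "irow y rs < irow (r' ! pos x' r') (ins y rs)" using Cons.IH[OF vrs] by blast
      then show "irow x (r # rs) < irow x' (ins x (r # rs))" using insP c2l by simp
    qed
  qed
qed


definition rowlen :: "nat list \<Rightarrow> nat \<Rightarrow> nat" where
  "rowlen nu i = (if i < length nu then nu ! i else 0)"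

definition decr :: "nat list \<Rightarrow> bool" where
  "decr nu \<longleftrightarrow> (\<forall>i. Suc i < length nu \<longrightarrow> nu ! Suc i \<le> nu ! i)"

definition sytf :: "nat list \<Rightarrow> (nat \<times> nat \<Rightarrow> nat) \<Rightarrow> bool" where
  "sytf nu S \<longleftrightarrow> ssyt nu S \<and> S ` cells nu = {1..sum_list nu}"

lemma cells_Sigma: "cells nu = Sigma {..<length nu} (\<lambda>r. {..<nu ! r})"
  by (auto simp: cells_def)

lemma finite_cells[simp]: "finite (cells nu)"
  unfolding cells_Sigma by auto

lemma card_cells: "card (cells nu) = sum_list nu"
  unfolding cells_Sigma by (simp add: sum_list_sum_nth atLeast0LessThan)

lemma cells_addcell:
  assumes "i \<le> length nu"
  shows "cells (addcell nu i) = insert (i, rowlen nu i) (cells nu)"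
proof (cases "i < length nu")
  case True
  show ?thesis
    unfolding cells_def addcell_def rowlen_def using True
    by (auto simp: nth_list_update split: if_splits)
next
  case False
  then have "i = length nu" using assms by simp
  then show ?thesis
    unfolding cells_def addcell_def rowlen_def
    by (auto simp: nth_append less_Suc_eq split: if_splits)
qed

lemma newcell_notin: "(i, rowlen nu i) \<notin> cells nu"
  by (auto simp: cells_def rowlen_def)

lemma sum_addcell: "i \<le> length nu \<Longrightarrow> sum_list (addcell nu i) = Suc (sum_list nu)"
  by (auto simp: addcell_def sum_list_update)

lemma valid_decr: "valid P \<Longrightarrow> decr (map length P)"
  by (auto simp: valid_def decr_def sb_iff)

lemma ssyt_out: "ssyt nu S \<Longrightarrow> x \<notin> cells nu \<Longrightarrow> S x = 0"
  by (cases x) (auto simp: ssyt_def)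

lemma sytf_le: "sytf nu S \<Longrightarrow> S x \<le> sum_list nu"
proof -
  assume a: "sytf nu S"
  show ?thesis
  proof (cases "x \<in> cells nu")
    case True
    then have "S x \<in> {1..sum_list nu}" using a unfolding sytf_def by blast
    then show ?thesis by simp
  next
    case False
    then show ?thesis using a ssyt_out[of nu S x] unfolding sytf_def by simp
  qed
qed

lemma sytf_inj: "sytf nu S \<Longrightarrow> inj_on S (cells nu)"
  by (rule eq_card_imp_inj_on) (auto simp: sytf_def card_cells)

lemma sytf_step:
  assumes S: "sytf nu S" and d: "decr nu" and i: "i \<le> length nu"
  shows "sytf (addcell nu i) (S((i, rowlen nu i) := Suc (sum_list nu)))"
proof -
  let ?x0 = "(i, rowlen nu i)" let ?m = "sum_list nu" let ?S = "S(?x0 := Suc ?m)"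
  have ce: "cells (addcell nu i) = insert ?x0 (cells nu)" using cells_addcell[OF i] .
  have nin: "?x0 \<notin> cells nu" by (rule newcell_notin)
  have le: "\<And>x. S x \<le> ?m" using sytf_le[OF S] .
  have ss: "ssyt nu S" using S by (simp add: sytf_def)
  have ssyt': "ssyt (addcell nu i) ?S"
    unfolding ssyt_def
  proof (intro conjI allI impI ballI)
    fix x assume "x \<notin> cells (addcell nu i)"
    then show "?S x = 0" using ce ss ssyt_out by auto
  next
    fix x assume "x \<in> cells (addcell nu i)"
    then show "1 \<le> ?S x" using ce ss by (auto simp: ssyt_def)
  next
    fix r c assume rc: "(r, Suc c) \<in> cells (addcell nu i)"
    show "?S (r, c) \<le> ?S (r, Suc c)"
    proof (cases "(r, Suc c) = ?x0")
      case True
      then show ?thesis using le[of "(r, c)"] by auto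
    next
      case False
      then have in1: "(r, Suc c) \<in> cells nu" using rc ce by auto
      then have "(r, c) \<in> cells nu" by (auto simp: cells_def)
      then have "(r, c) \<noteq> ?x0" using nin by auto
      then show ?thesis using False in1 ss by (auto simp: ssyt_def)
    qed
  next
    fix r c assume rc: "(Suc r, c) \<in> cells (addcell nu i)"
    show "?S (r, c) < ?S (Suc r, c)"
    proof (cases "(Suc r, c) = ?x0")
      case True
      then show ?thesis using le[of "(r, c)"] by auto
    next
      case False
      then have in1: "(Suc r, c) \<in> cells nu" using rc ce by auto
      then have "(r, c) \<in> cells nu" using d by (auto simp: cells_def decr_def)
      then have "(r, c) \<noteq> ?x0" using nin by auto
      then show ?thesis using False in1 ss by (auto simp: ssyt_def)
    qed
  qed
  have "?S ` cells (addcell nu i) = insert (Suc ?m) (S ` cells nu)"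
    using ce nin by auto
  also have "\<dots> = {1..Suc ?m}" using S by (auto simp: sytf_def)
  finally show ?thesis using ssyt' sum_addcell[OF i] by (simp add: sytf_def)
qed

lemma syt_Des_step:
  assumes S: "sytf nu S" and i: "i \<le> length nu"
  shows "syt_Des (addcell nu i) (S((i, rowlen nu i) := Suc (sum_list nu))) =
    syt_Des nu S \<union> {j. j = sum_list nu \<and> 1 \<le> j \<and> (\<exists>x\<in>cells nu. S x = sum_list nu \<and> fst x < i)}"
proof -
  let ?x0 = "(i, rowlen nu i)" let ?m = "sum_list nu" let ?S = "S(?x0 := Suc ?m)"
  have ce: "cells (addcell nu i) = insert ?x0 (cells nu)" using cells_addcell[OF i] .
  have nin: "?x0 \<notin> cells nu" by (rule newcell_notin)
  have le: "\<And>x. S x \<le> ?m" using sytf_le[OF S] .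
  show ?thesis
  proof (intro set_eqI iffI)
    fix j assume "j \<in> syt_Des (addcell nu i) ?S"
    then obtain x y where j: "1 \<le> j" "x \<in> cells (addcell nu i)" "y \<in> cells (addcell nu i)"
      "?S x = j" "?S y = Suc j" "fst x < fst y" unfolding syt_Des_def by blast
    show "j \<in> syt_Des nu S \<union> {j. j = ?m \<and> 1 \<le> j \<and> (\<exists>x\<in>cells nu. S x = ?m \<and> fst x < i)}"
    proof (cases "y = ?x0")
      case True
      then have jm: "j = ?m" using j by simp
      have "x \<noteq> ?x0" using j jm by auto
      then have "x \<in> cells nu" "S x = ?m" using j ce jm by auto
      then show ?thesis using jm j True by auto
    next
      case False
      then have "y \<in> cells nu" "S y = Suc j" using j ce by auto
      then have "Suc j \<le> ?m" using le[of y] by simp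
      then have "x \<noteq> ?x0" using j by auto
      then have "x \<in> cells nu" "S x = j" using j ce by auto
      then show ?thesis using j \<open>y \<in> cells nu\<close> \<open>S y = Suc j\<close> unfolding syt_Des_def by blast
    qed
  next
    fix j assume "j \<in> syt_Des nu S \<union> {j. j = ?m \<and> 1 \<le> j \<and> (\<exists>x\<in>cells nu. S x = ?m \<and> fst x < i)}"
    then show "j \<in> syt_Des (addcell nu i) ?S"
    proof
      assume "j \<in> syt_Des nu S"
      then obtain x y where j: "1 \<le> j" "x \<in> cells nu" "y \<in> cells nu"
        "S x = j" "S y = Suc j" "fst x < fst y" unfolding syt_Des_def by blast
      have "x \<noteq> ?x0" "y \<noteq> ?x0" using j nin by auto
      then show ?thesis unfolding syt_Des_def using j ce
        by (intro CollectI conjI bexI[of _ x] bexI[of _ y]) auto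
    next
      assume "j \<in> {j. j = ?m \<and> 1 \<le> j \<and> (\<exists>x\<in>cells nu. S x = ?m \<and> fst x < i)}"
      then obtain x where j: "j = ?m" "1 \<le> j" "x \<in> cells nu" "S x = ?m" "fst x < i" by blast
      have "x \<noteq> ?x0" using j nin by auto
      then show ?thesis unfolding syt_Des_def using j ce
        by (intro CollectI conjI bexI[of _ x] bexI[of _ ?x0]) auto
    qed
  qed
qed

fun rskr :: "nat list \<Rightarrow> nat list list \<times> (nat \<times> nat \<Rightarrow> nat)" where
  "rskr [] = ([], \<lambda>_. 0)"
| "rskr (a # ws) = (case rskr ws of (P, S) \<Rightarrow>
     (ins a P, S((irow a P, rowlen (map length P) (irow a P)) := Suc (length ws))))"

definition rsk :: "nat list \<Rightarrow> nat list list \<times> (nat \<times> nat \<Rightarrow> nat)" where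
  "rsk w = rskr (rev w)"

lemma rsk_Nil[simp]: "rsk [] = ([], \<lambda>_. 0)"
  by (simp add: rsk_def)

lemma rsk_snoc: "rsk (w @ [a]) = (case rsk w of (P, S) \<Rightarrow>
     (ins a P, S((irow a P, rowlen (map length P) (irow a P)) := Suc (length w))))"
  by (simp add: rsk_def)

lemma word_Des_snoc:
  assumes "w \<noteq> []"
  shows "word_Des (w @ [a]) = word_Des w \<union> {j. j = length w \<and> a < last w}"
proof -
  have l: "last w = w ! (length w - 1)" using assms by (simp add: last_conv_nth)
  show ?thesis
    unfolding word_Des_def using assms l
    by (auto simp: nth_append less_Suc_eq le_neq_implies_less split: if_splits)
qed

lemma word_Des_single: "word_Des [a] = {}"
  by (auto simp: word_Des_def)

definition INV :: "nat list \<Rightarrow> bool" where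
  "INV w \<longleftrightarrow> (case rsk w of (P, S) \<Rightarrow> valid P \<and> mset (concat P) = mset w \<and>
      sytf (map length P) S)"

lemma sum_shape: "sum_list (map length P) = length (concat P)"
  by (simp add: length_concat)

lemma INV_all: "INV w"
proof (induction w rule: rev_induct)
  case Nil
  show ?case unfolding INV_def
    by (auto simp: sytf_def ssyt_def cells_def)
next
  case (snoc a w)
  obtain P S where rw: "rsk w = (P, S)" by (cases "rsk w") auto
  have v: "valid P" and ms: "mset (concat P) = mset w" and sy: "sytf (map length P) S"
    using snoc.IH rw by (auto simp: INV_def)
  let ?i = "irow a P" let ?nu = "map length P"
  have lw: "sum_list ?nu = length w" using ms sum_shape
    by (metis size_mset)
  have i: "?i \<le> length ?nu" using ins_shape[of a P] by simp
  have sh: "map length (ins a P) = addcell ?nu ?i" using ins_shape[of a P] by simp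
  have r2: "rsk (w @ [a]) = (ins a P, S((?i, rowlen ?nu ?i) := Suc (length w)))"
    using rw by (simp add: rsk_snoc)
  have v2: "valid (ins a P)" using ins_valid[OF v] .
  have ms2: "mset (concat (ins a P)) = mset (w @ [a])" using ins_mset ms by simp
  have sy2: "sytf (map length (ins a P)) (S((?i, rowlen ?nu ?i) := Suc (length w)))"
    using sytf_step[OF sy valid_decr[OF v] i] sh lw by simp
  show ?case using r2 v2 ms2 sy2 by (simp add: INV_def)
qed

lemma INV_facts:
  assumes "rsk w = (P, S)"
  shows "valid P" "mset (concat P) = mset w" "sytf (map length P) S"
    "sum_list (map length P) = length w"
proof -
  show "valid P" "mset (concat P) = mset w" "sytf (map length P) S"
    using INV_all[of w] assms by (auto simp: INV_def)
  then show "sum_list (map length P) = length w" using sum_shape by (metis size_mset)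
qed

lemma rsk_Des:
  assumes "rsk w = (P, S)"
  shows "syt_Des (map length P) S = word_Des w"
  using assms
proof (induction w arbitrary: P S rule: rev_induct)
  case Nil
  then show ?case by (auto simp: syt_Des_def word_Des_def)
next
  case (snoc a w)
  obtain P0 S0 where rw: "rsk w = (P0, S0)" by (cases "rsk w") auto
  note f = INV_facts[OF rw]
  have de: "syt_Des (map length P0) S0 = word_Des w" using snoc.IH[OF rw] .
  let ?i = "irow a P0" let ?nu = "map length P0"
  have i: "?i \<le> length ?nu" using ins_shape[of a P0] by simp
  have sh: "map length (ins a P0) = addcell ?nu ?i" using ins_shape[of a P0] by simp
  have r2: "P = ins a P0" "S = S0((?i, rowlen ?nu ?i) := Suc (length w))"
    using rw snoc.prems by (auto simp: rsk_snoc)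
  have step: "syt_Des (map length P) S = word_Des w \<union>
      {j. j = length w \<and> 1 \<le> j \<and> (\<exists>x\<in>cells ?nu. S0 x = length w \<and> fst x < ?i)}"
    using syt_Des_step[OF f(3) i] r2 sh f(4) de by simp
  show ?case
  proof (cases w rule: rev_exhaust)
    case Nil
    then show ?thesis using step de by (auto simp: word_Des_def)
  next
    case (snoc u b)
    obtain Pu Su where ru: "rsk u = (Pu, Su)" by (cases "rsk u") auto
    note fu = INV_facts[OF ru]
    let ?ib = "irow b Pu" let ?xb = "(?ib, rowlen (map length Pu) ?ib)"
    have P0: "P0 = ins b Pu" "S0 = Su(?xb := Suc (length u))"
      using rw ru snoc by (auto simp: rsk_snoc)
    have ibl: "?ib \<le> length (map length Pu)" using ins_shape[of b Pu] by simp
    have xbin: "?xb \<in> cells ?nu"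
      using P0(1) ins_shape[of b Pu] cells_addcell[OF ibl] by simp
    have iff: "(\<exists>x\<in>cells ?nu. S0 x = length w \<and> fst x < ?i) \<longleftrightarrow> ?ib < ?i"
    proof
      assume "\<exists>x\<in>cells ?nu. S0 x = length w \<and> fst x < ?i"
      then obtain x where x: "S0 x = length w" "fst x < ?i" by blast
      have "x = ?xb"
      proof (rule ccontr)
        assume "x \<noteq> ?xb"
        then have "S0 x = Su x" using P0 by simp
        then show False using sytf_le[OF fu(3), of x] fu(4) x snoc by simp
      qed
      then show "?ib < ?i" using x by simp
    next
      assume "?ib < ?i"
      then show "\<exists>x\<in>cells ?nu. S0 x = length w \<and> fst x < ?i"
        using xbin P0 snoc by (intro bexI[of _ ?xb]) auto
    qed
    have "?ib < ?i \<longleftrightarrow> a < b" using bump[OF fu(1), of b a] P0(1) by (meson not_le order.strict_trans1 order_less_asym)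
    then have "{j. j = length w \<and> 1 \<le> j \<and> (\<exists>x\<in>cells ?nu. S0 x = length w \<and> fst x < ?i)} =
        {j. j = length w \<and> a < last w}" using iff snoc by auto
    then show ?thesis using step word_Des_snoc[of w a] snoc by simp
  qed
qed


lemma rsk_inj: "length w1 = length w2 \<Longrightarrow> rsk w1 = rsk w2 \<Longrightarrow> w1 = w2"
proof (induction w1 arbitrary: w2 rule: rev_induct)
  case Nil
  then show ?case by simp
next
  case (snoc a1 u1)
  obtain u2 a2 where w2: "w2 = u2 @ [a2]" using snoc.prems(1) by (cases w2 rule: rev_exhaust) auto
  obtain P1 S1 where r1: "rsk u1 = (P1, S1)" by (cases "rsk u1") auto
  obtain P2 S2 where r2: "rsk u2 = (P2, S2)" by (cases "rsk u2") auto
  note f1 = INV_facts[OF r1] and f2 = INV_facts[OF r2]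
  have len: "length u1 = length u2" using snoc.prems(1) w2 by simp
  let ?i1 = "irow a1 P1" let ?i2 = "irow a2 P2"
  let ?x1 = "(?i1, rowlen (map length P1) ?i1)" let ?x2 = "(?i2, rowlen (map length P2) ?i2)"
  have "(ins a1 P1, S1(?x1 := Suc (length u1))) = (ins a2 P2, S2(?x2 := Suc (length u2)))"
    using snoc.prems(2) w2 r1 r2 by (simp add: rsk_snoc)
  then have eq0: "ins a1 P1 = ins a2 P2 \<and> S1(?x1 := Suc (length u1)) = S2(?x2 := Suc (length u2))"
    by (simp only: prod.inject)
  have eq: "ins a1 P1 = ins a2 P2" "S1(?x1 := Suc (length u1)) = S2(?x2 := Suc (length u2))"
    using eq0 by (rule conjunct1, rule conjunct2)
  have hx: "x = ?x1" if "(S1(?x1 := Suc (length u1))) x = Suc (length u1)" for x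
  proof (rule ccontr)
    assume "x \<noteq> ?x1"
    then show False using that sytf_le[OF f1(3), of x] f1(4) by simp
  qed
  have h2: "(S1(?x1 := Suc (length u1))) ?x2 = Suc (length u1)" using eq(2) len by simp
  have x12: "?x1 = ?x2" using hx[OF h2] by (rule sym)
  then have i12: "?i1 = ?i2" by simp
  have "(P1, a1) = revins (ins a1 P1) (irow a1 P1)" using I1[OF f1(1)] by (rule sym)
  also have "\<dots> = revins (ins a2 P2) (irow a2 P2)" using eq(1) i12 by (rule arg_cong2)
  also have "\<dots> = (P2, a2)" by (rule I1[OF f2(1)])
  finally have Pa: "P1 = P2" "a1 = a2" by simp_all
  have z1: "S1 ?x1 = 0" using ssyt_out[OF _ newcell_notin] f1(3) by (simp add: sytf_def)
  have z2: "S2 ?x2 = 0" using ssyt_out[OF _ newcell_notin] f2(3) by (simp add: sytf_def)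
  have "S1 = S2"
  proof
    fix x
    show "S1 x = S2 x"
    proof (cases "x = ?x1")
      case True
      then show ?thesis using z1 z2 x12 by simp
    next
      case False
      then show ?thesis using fun_cong[OF eq(2), of x] x12 by (simp split: if_splits)
    qed
  qed
  then have "u1 = u2" using snoc.IH[of u2] len r1 r2 Pa by simp
  then show ?case using w2 Pa by simp
qed

lemma sytf_remove:
  assumes S: "sytf nu S" and d: "decr nu'" and i: "i \<le> length nu'" and nu: "nu = addcell nu' i"
    and Sx: "S (i, rowlen nu' i) = sum_list nu"
  shows "sytf nu' (S((i, rowlen nu' i) := 0))"
proof -
  let ?x0 = "(i, rowlen nu' i)" let ?S = "S(?x0 := 0)"
  have ce: "cells nu = insert ?x0 (cells nu')" using cells_addcell[OF i] nu by simp
  have nin: "?x0 \<notin> cells nu'" by (rule newcell_notin)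
  have ss: "ssyt nu S" using S by (simp add: sytf_def)
  have ssyt': "ssyt nu' ?S"
    unfolding ssyt_def
  proof (intro conjI allI impI ballI)
    fix x assume "x \<notin> cells nu'"
    then show "?S x = 0" using ce ssyt_out[OF ss, of x] by auto
  next
    fix x assume "x \<in> cells nu'"
    then show "1 \<le> ?S x" using ce ss nin by (auto simp: ssyt_def)
  next
    fix r c assume rc: "(r, Suc c) \<in> cells nu'"
    then have "(r, c) \<in> cells nu'" by (auto simp: cells_def)
    then show "?S (r, c) \<le> ?S (r, Suc c)" using rc nin ce ss by (auto simp: ssyt_def)
  next
    fix r c assume rc: "(Suc r, c) \<in> cells nu'"
    then have "(r, c) \<in> cells nu'" using d by (auto simp: cells_def decr_def)
    then show "?S (r, c) < ?S (Suc r, c)" using rc nin ce ss by (auto simp: ssyt_def)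
  qed
  have inj: "inj_on S (cells nu)" using sytf_inj[OF S] .
  have e1: "?S ` cells nu' = S ` cells nu'" using nin by auto
  have e2: "cells nu' = cells nu - {?x0}" using ce nin by auto
  have e3: "S ` (cells nu - {?x0}) = S ` cells nu - S ` {?x0}"
    using ce by (intro inj_on_image_set_diff[OF inj]) blast+
  have e4: "S ` cells nu - {S ?x0} = {1..Suc (sum_list nu')} - {Suc (sum_list nu')}"
    using S Sx sum_addcell[OF i] nu by (simp add: sytf_def)
  have e5: "{1..Suc (sum_list nu')} - {Suc (sum_list nu')} = {1..sum_list nu'}" by auto
  have "?S ` cells nu' = S ` (cells nu - {?x0})" unfolding e2[symmetric] by (rule e1)
  also have "\<dots> = S ` cells nu - {S ?x0}" using e3 by simp
  also have "\<dots> = {1..sum_list nu'}" using e4 e5 by simp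
  finally have "?S ` cells nu' = {1..sum_list nu'}" .
  then show ?thesis using ssyt' by (simp add: sytf_def)
qed

lemma corner_find:
  assumes v: "valid P" and S: "sytf (map length P) S" and x: "(i, c) \<in> cells (map length P)"
    and Sx: "S (i, c) = sum_list (map length P)"
  shows "corner P i" "Suc c = length (P ! i)"
proof -
  let ?nu = "map length P"
  have ss: "ssyt ?nu S" using S by (simp add: sytf_def)
  have inj: "inj_on S (cells ?nu)" using sytf_inj[OF S] .
  have n1: "(i, Suc c) \<notin> cells ?nu"
  proof
    assume a: "(i, Suc c) \<in> cells ?nu"
    then have "S (i, c) \<le> S (i, Suc c)" using ss by (simp add: ssyt_def)
    then have "S (i, Suc c) = S (i, c)" using sytf_le[OF S, of "(i, Suc c)"] Sx by simp
    then show False using inj a x by (metis inj_on_contraD n_not_Suc_n prod.inject)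
  qed
  have n2: "(Suc i, c) \<notin> cells ?nu"
  proof
    assume a: "(Suc i, c) \<in> cells ?nu"
    then have "S (i, c) < S (Suc i, c)" using ss by (simp add: ssyt_def)
    then show False using sytf_le[OF S, of "(Suc i, c)"] Sx by simp
  qed
  show "Suc c = length (P ! i)" using x n1 by (auto simp: cells_def)
  show "corner P i" using x n2 n1 by (auto simp: cells_def corner_def)
qed

lemma rsk_surj_aux:
  "valid P \<Longrightarrow> sytf (map length P) S \<Longrightarrow> sum_list (map length P) = m \<Longrightarrow> \<exists>w. rsk w = (P, S)"
proof (induction m arbitrary: P S)
  case 0
  then have "P = []" using 0 by (cases P) (auto simp: valid_Cons)
  moreover have "S = (\<lambda>_. 0)"
  proof
    fix x show "S x = 0" using 0 \<open>P = []\<close> ssyt_out[of "[]" S x] by (simp add: sytf_def cells_def)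
  qed
  ultimately show ?case by (intro exI[of _ "[]"]) simp
next
  case (Suc m)
  let ?nu = "map length P"
  have "Suc m \<in> S ` cells ?nu" using Suc.prems by (simp add: sytf_def)
  then obtain i c where x: "(i, c) \<in> cells ?nu" "S (i, c) = Suc m" by auto
  have co: "corner P i" and lc: "Suc c = length (P ! i)"
    using corner_find[OF Suc.prems(1,2) x(1)] x(2) Suc.prems(3) by auto
  obtain P' a where rv: "revins P i = (P', a)" by (cases "revins P i") auto
  have I: "valid P'" "ins a P' = P" "irow a P' = i" using I2[OF Suc.prems(1) co rv] by auto
  let ?nu' = "map length P'"
  have shp: "?nu = addcell ?nu' i" and il: "i \<le> length ?nu'"
    using ins_shape[of a P'] I by auto
  have rl: "rowlen ?nu' i = c"
  proof (cases "i < length ?nu'")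
    case True
    then have "?nu ! i = Suc (?nu' ! i)" using shp by (simp add: addcell_def)
    then show ?thesis using True lc co by (simp add: rowlen_def corner_def)
  next
    case False
    then have "i = length ?nu'" using il by simp
    then have "?nu ! i = 1" using shp by (simp add: addcell_def nth_append)
    then show ?thesis using False lc co by (simp add: rowlen_def corner_def)
  qed
  have sy': "sytf ?nu' (S((i, c) := 0))"
    using sytf_remove[OF Suc.prems(2) valid_decr[OF I(1)] il shp] rl x(2) Suc.prems(3) by simp
  have sm: "sum_list ?nu' = m" using sum_addcell[OF il] shp Suc.prems(3) by simp
  obtain w where w: "rsk w = (P', S((i, c) := 0))" using Suc.IH[OF I(1) sy' sm] by blast
  have lw: "length w = m" using INV_facts(4)[OF w] sm by simp
  have "rsk (w @ [a]) = (P, S)"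
    using w I rl lw x(2) by (auto simp: rsk_snoc)
  then show ?case by blast
qed

lemma rsk_surj: "valid P \<Longrightarrow> sytf (map length P) S \<Longrightarrow> \<exists>w. rsk w = (P, S)"
  using rsk_surj_aux by blast


definition to_fun :: "nat list list \<Rightarrow> nat \<times> nat \<Rightarrow> nat" where
  "to_fun P = (\<lambda>(r, c). if r < length P \<and> c < length (P ! r) then P ! r ! c else 0)"

definition of_fun :: "nat list \<Rightarrow> (nat \<times> nat \<Rightarrow> nat) \<Rightarrow> nat list list" where
  "of_fun nu T = map (\<lambda>r. map (\<lambda>c. T (r, c)) [0..<nu ! r]) [0..<length nu]"

lemma cells_shape: "(r, c) \<in> cells (map length P) \<longleftrightarrow> r < length P \<and> c < length (P ! r)"
  by (auto simp: cells_def)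

lemma to_fun_ssyt:
  assumes v: "valid P" and pos: "\<forall>z\<in>set (concat P). 1 \<le> z"
  shows "ssyt (map length P) (to_fun P)"
  unfolding ssyt_def
proof (intro conjI allI impI ballI)
  fix x assume "x \<notin> cells (map length P)"
  then show "to_fun P x = 0" by (cases x) (auto simp: cells_shape to_fun_def)
next
  fix x assume "x \<in> cells (map length P)"
  then show "1 \<le> to_fun P x" using pos by (cases x) (auto simp: cells_shape to_fun_def, metis nth_mem)
next
  fix r c assume rc: "(r, Suc c) \<in> cells (map length P)"
  then have "sorted (P ! r)" using v by (auto simp: valid_def cells_shape)
  then show "to_fun P (r, c) \<le> to_fun P (r, Suc c)" using rc
    by (auto simp: to_fun_def cells_shape intro: sorted_nth_mono)
next
  fix r c assume rc: "(Suc r, c) \<in> cells (map length P)"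
  then have "sb (P ! r) (P ! Suc r)" using v by (auto simp: valid_def cells_shape)
  then show "to_fun P (r, c) < to_fun P (Suc r, c)" using rc
    by (auto simp: to_fun_def cells_shape sb_iff)
qed

lemma shape_of_fun[simp]: "map length (of_fun nu T) = nu"
  by (auto simp: of_fun_def intro: nth_equalityI)

lemma to_fun_of_fun:
  assumes "\<And>x. x \<notin> cells nu \<Longrightarrow> T x = 0"
  shows "to_fun (of_fun nu T) = T"
proof
  fix x :: "nat \<times> nat"
  obtain r c where x: "x = (r, c)" by (cases x)
  show "to_fun (of_fun nu T) x = T x"
    using assms[of x] x by (auto simp: to_fun_def of_fun_def cells_def)
qed

lemma of_fun_to_fun: "of_fun (map length P) (to_fun P) = P"
  by (auto simp: of_fun_def to_fun_def intro!: nth_equalityI)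

lemma valid_of_fun:
  assumes T: "ssyt nu T" and p: "nu \<in> partitions_of m"
  shows "valid (of_fun nu T)"
proof -
  let ?P = "of_fun nu T"
  have d: "\<And>i. Suc i < length nu \<Longrightarrow> nu ! Suc i \<le> nu ! i"
    using p by (auto simp: partitions_of_def sorted_wrt_iff_nth_less)
  have nz: "\<And>i. i < length nu \<Longrightarrow> nu ! i \<noteq> 0"
    using p by (auto simp: partitions_of_def in_set_conv_nth)
  have rows: "\<forall>r\<in>set ?P. sorted r \<and> r \<noteq> []"
  proof
    fix r assume "r \<in> set ?P"
    then obtain i where i: "i < length nu" "r = map (\<lambda>c. T (i, c)) [0..<nu ! i]"
      by (auto simp: of_fun_def)
    have "sorted r"
      unfolding sorted_iff_nth_Suc
    proof (intro allI impI)
      fix k assume "Suc k < length r"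
      then have "(i, Suc k) \<in> cells nu" using i by (simp add: cells_def)
      then have "T (i, k) \<le> T (i, Suc k)" using T by (simp add: ssyt_def)
      then show "r ! k \<le> r ! Suc k" using i \<open>Suc k < length r\<close> by simp
    qed
    then show "sorted r \<and> r \<noteq> []" using i nz[of i] by simp
  qed
  have "\<forall>i. Suc i < length ?P \<longrightarrow> sb (?P ! i) (?P ! Suc i)"
  proof (intro allI impI)
    fix i assume i: "Suc i < length ?P"
    then have i': "Suc i < length nu" by (simp add: of_fun_def)
    show "sb (?P ! i) (?P ! Suc i)"
      unfolding sb_iff
    proof (intro conjI allI impI)
      show "length (?P ! Suc i) \<le> length (?P ! i)" using d[OF i'] i' by (simp add: of_fun_def)
      fix k assume "k < length (?P ! Suc i)"
      then have k: "k < nu ! Suc i" using i' by (simp add: of_fun_def)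
      then have "(Suc i, k) \<in> cells nu" using i' by (simp add: cells_def)
      then have "T (i, k) < T (Suc i, k)" using T by (simp add: ssyt_def)
      then show "?P ! i ! k < ?P ! Suc i ! k" using i' k d[OF i'] by (simp add: of_fun_def)
    qed
  qed
  then show ?thesis using rows by (simp add: valid_def)
qed

lemma count_concat: "count (mset (concat P)) k = (\<Sum>i<length P. count (mset (P ! i)) k)"
proof (induction P)
  case Nil
  then show ?case by simp
next
  case (Cons r rs)
  then show ?case by (simp add: sum.lessThan_Suc_shift del: sum.lessThan_Suc)
qed

lemma count_to_fun: "count (mset (concat P)) k = card {x \<in> cells (map length P). to_fun P x = k}"
proof -
  have e: "{x \<in> cells (map length P). to_fun P x = k} =
      Sigma {..<length P} (\<lambda>i. {c. c < length (P ! i) \<and> P ! i ! c = k})"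
    by (auto simp: cells_shape to_fun_def)
  have "card {x \<in> cells (map length P). to_fun P x = k} =
      (\<Sum>i<length P. card {c. c < length (P ! i) \<and> P ! i ! c = k})"
    unfolding e by (subst card_SigmaI) auto
  also have "\<dots> = (\<Sum>i<length P. count (mset (P ! i)) k)"
    by (rule sum.cong) (auto simp: count_mset count_list_eq_length_filter length_filter_conv_card eq_commute)
  finally show ?thesis using count_concat by simp
qed

definition Mla :: "nat list \<Rightarrow> nat multiset" where
  "Mla la = (\<Sum>i<length la. replicate_mset (la ! i) (Suc i))"

lemma words_Mla: "words la = {w. mset w = Mla la}"
  by (simp add: words_def Mla_def)

lemma count_Mla: "count (Mla la) k = (if 1 \<le> k \<and> k \<le> length la then la ! (k - 1) else 0)"
proof -
  have "count (Mla la) k = (\<Sum>i<length la. if k = Suc i then la ! i else 0)"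
    by (simp add: Mla_def count_sum)
  also have "\<dots> = (\<Sum>i\<in>{..<length la} \<inter> {k - 1}. if k = Suc i then la ! i else 0)"
    by (rule sum.mono_neutral_right) auto
  also have "\<dots> = (if 1 \<le> k \<and> k \<le> length la then la ! (k - 1) else 0)"
    by (cases k) (auto simp: Int_insert_right)
  finally show ?thesis .
qed

lemma Mla_pos: "z \<in># Mla la \<Longrightarrow> 1 \<le> z"
  using count_Mla[of la z] by (metis not_in_iff)

lemma Mla_le: "z \<in># Mla la \<Longrightarrow> z \<le> length la"
  using count_Mla[of la z] by (metis not_in_iff)

definition Pset :: "nat list \<Rightarrow> nat list \<Rightarrow> nat list list set" where
  "Pset la nu = {P. valid P \<and> mset (concat P) = Mla la \<and> map length P = nu}"

lemma kostka_Pset: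
  assumes p: "nu \<in> partitions_of m"
  shows "card (Pset la nu) = kostka nu la"
proof -
  have "bij_betw to_fun (Pset la nu) {T. ssyt nu T \<and> has_weight nu la T}"
  proof (rule bij_betw_imageI)
    show "inj_on to_fun (Pset la nu)"
    proof
      fix P1 P2 assume "P1 \<in> Pset la nu" "P2 \<in> Pset la nu" "to_fun P1 = to_fun P2"
      then show "P1 = P2" using of_fun_to_fun[of P1] of_fun_to_fun[of P2] by (simp add: Pset_def)
    qed
    show "to_fun ` Pset la nu = {T. ssyt nu T \<and> has_weight nu la T}"
    proof (intro set_eqI iffI)
      fix T assume "T \<in> to_fun ` Pset la nu"
      then obtain P where P: "P \<in> Pset la nu" "T = to_fun P" by blast
      have pos: "\<forall>z\<in>set (concat P). 1 \<le> z"
      proof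
        fix z assume "z \<in> set (concat P)"
        moreover have m: "mset (concat P) = Mla la" using P by (simp add: Pset_def)
        ultimately have "z \<in># Mla la" by (metis set_mset_mset)
        then show "1 \<le> z" by (rule Mla_pos)
      qed
      have "ssyt nu T" using to_fun_ssyt[OF _ pos] P by (simp add: Pset_def)
      moreover have "has_weight nu la T"
        unfolding has_weight_def
      proof
        fix k
        show "card {x \<in> cells nu. T x = k} = (if 1 \<le> k \<and> k \<le> length la then la ! (k - 1) else 0)"
          using count_to_fun[of P k] count_Mla[of la k] P by (simp add: Pset_def)
      qed
      ultimately show "T \<in> {T. ssyt nu T \<and> has_weight nu la T}" by simp
    next
      fix T assume T: "T \<in> {T. ssyt nu T \<and> has_weight nu la T}"
      let ?P = "of_fun nu T"
      have tf: "to_fun ?P = T" using T ssyt_out[of nu T] by (intro to_fun_of_fun) auto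
      have v: "valid ?P" using valid_of_fun[OF _ p] T by simp
      have "mset (concat ?P) = Mla la"
      proof (rule multiset_eqI)
        fix k
        have "count (mset (concat ?P)) k = card {x \<in> cells nu. T x = k}"
          using count_to_fun[of ?P k] tf by simp
        also have "\<dots> = count (Mla la) k" using T count_Mla[of la k] by (simp add: has_weight_def)
        finally show "count (mset (concat ?P)) k = count (Mla la) k" .
      qed
      then have "?P \<in> Pset la nu" using v by (simp add: Pset_def)
      then show "T \<in> to_fun ` Pset la nu" using tf by (metis image_eqI)
    qed
  qed
  then show ?thesis unfolding kostka_def by (rule bij_betw_same_card)
qed


definition pshape :: "nat list \<Rightarrow> bool" where
  "pshape nu \<longleftrightarrow> (\<forall>i j. i \<le> j \<longrightarrow> j < length nu \<longrightarrow> nu ! j \<le> nu ! i)"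

lemma partition_pshape: "nu \<in> partitions_of m \<Longrightarrow> pshape nu"
  unfolding pshape_def
proof (intro allI impI)
  fix i j assume p: "nu \<in> partitions_of m" and ij: "i \<le> j" "j < length nu"
  have s: "sorted_wrt (\<ge>) nu" using p by (simp add: partitions_of_def)
  show "nu ! j \<le> nu ! i"
  proof (cases "i = j")
    case False
    then have "i < j" using ij by simp
    then show ?thesis using s ij(2) sorted_wrt_nth_less by fastforce
  qed simp
qed

lemma cell_down:
  assumes p: "pshape nu" and rc: "(r', c') \<in> cells nu" and le: "r \<le> r'" "c \<le> c'"
  shows "(r, c) \<in> cells nu"
proof -
  have a: "r' < length nu" "c' < nu ! r'" using rc by (auto simp: cells_def)
  have "nu ! r' \<le> nu ! r" using p a(1) le(1) by (simp add: pshape_def)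
  then show ?thesis using a le by (simp add: cells_def)
qed

definition ltT :: "(nat \<times> nat \<Rightarrow> nat) \<Rightarrow> nat \<times> nat \<Rightarrow> nat \<times> nat \<Rightarrow> bool" where
  "ltT T y x \<longleftrightarrow> T y < T x \<or> (T y = T x \<and> snd y < snd x)"

lemma std_eq: "standardize nu T x = (if x \<in> cells nu then Suc (card {y \<in> cells nu. ltT T y x}) else 0)"
  by (simp add: standardize_def ltT_def)

lemma ltT_irrefl: "\<not> ltT T x x"
  by (simp add: ltT_def)

lemma ltT_trans: "ltT T x y \<Longrightarrow> ltT T y z \<Longrightarrow> ltT T x z"
  by (auto simp: ltT_def)

lemma col_lt:
  assumes T: "ssyt nu T" and p: "pshape nu"
  shows "(r', c) \<in> cells nu \<Longrightarrow> r < r' \<Longrightarrow> T (r, c) < T (r', c)"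
proof (induction r')
  case 0
  then show ?case by simp
next
  case (Suc k)
  have "T (k, c) < T (Suc k, c)" using T Suc.prems(1) by (simp add: ssyt_def)
  moreover have "r < k \<Longrightarrow> T (r, c) < T (k, c)"
    using Suc.IH cell_down[OF p Suc.prems(1), of k c] by simp
  ultimately show ?case using Suc.prems(2) by (cases "r < k") (auto simp: less_Suc_eq)
qed

lemma row_le:
  assumes T: "ssyt nu T"
  shows "(r, c') \<in> cells nu \<Longrightarrow> c \<le> c' \<Longrightarrow> T (r, c) \<le> T (r, c')"
proof (induction c')
  case 0
  then show ?case by simp
next
  case (Suc k)
  have "T (r, k) \<le> T (r, Suc k)" using T Suc.prems(1) by (simp add: ssyt_def)
  moreover have "c \<le> k \<Longrightarrow> T (r, c) \<le> T (r, k)"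
    using Suc.IH Suc.prems(1) by (simp add: cells_def)
  ultimately show ?case using Suc.prems(2) by (cases "c \<le> k") (auto simp: le_Suc_eq)
qed

lemma ltT_total:
  assumes T: "ssyt nu T" and p: "pshape nu" and x: "x \<in> cells nu" and y: "y \<in> cells nu" and ne: "x \<noteq> y"
  shows "ltT T x y \<or> ltT T y x"
proof (rule ccontr)
  assume "\<not> (ltT T x y \<or> ltT T y x)"
  then have e: "T x = T y" "snd x = snd y" by (auto simp: ltT_def)
  obtain r c r' where xy: "x = (r, c)" "y = (r', c)" using e(2) by (cases x, cases y) auto
  have "r \<noteq> r'" using ne xy by simp
  then show False using col_lt[OF T p, of r' c r] col_lt[OF T p, of r c r'] x y xy e(1)
    by (cases "r < r'") auto
qed

lemma hstrip:
  assumes T: "ssyt nu T" and p: "pshape nu" and x: "x \<in> cells nu" and y: "y \<in> cells nu"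
    and e: "T y = T x" and s: "snd y < snd x"
  shows "fst x \<le> fst y"
proof (rule ccontr)
  assume "\<not> fst x \<le> fst y"
  then have lt: "fst y < fst x" by simp
  have z: "(fst y, snd x) \<in> cells nu" using cell_down[OF p, of "fst x" "snd x" "fst y" "snd x"] x lt by simp
  have "T y \<le> T (fst y, snd x)" using row_le[OF T z, of "snd y"] s by simp
  moreover have "T (fst y, snd x) < T x" using col_lt[OF T p, of "fst x" "snd x" "fst y"] x lt by simp
  ultimately show False using e by simp
qed

lemma rank_mono:
  assumes T: "ssyt nu T" and x: "x \<in> cells nu" and y: "y \<in> cells nu" and l: "ltT T y x"
  shows "standardize nu T y < standardize nu T x"
proof -
  have "{z \<in> cells nu. ltT T z y} \<subset> {z \<in> cells nu. ltT T z x}"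
    using l y ltT_trans[of T _ y x] ltT_irrefl[of T y] by blast
  then have "card {z \<in> cells nu. ltT T z y} < card {z \<in> cells nu. ltT T z x}"
    by (rule psubset_card_mono[rotated]) simp
  then show ?thesis using x y by (simp add: std_eq)
qed

lemma std_lt_iff:
  assumes T: "ssyt nu T" and p: "pshape nu" and x: "x \<in> cells nu" and y: "y \<in> cells nu"
  shows "standardize nu T y < standardize nu T x \<longleftrightarrow> ltT T y x"
proof
  assume a: "standardize nu T y < standardize nu T x"
  show "ltT T y x"
  proof (rule ccontr)
    assume n: "\<not> ltT T y x"
    have "x \<noteq> y" using a by auto
    then have "ltT T x y" using ltT_total[OF T p x y] n by auto
    then show False using rank_mono[OF T y x] a by simp
  qed
qed (rule rank_mono[OF T x y])

lemma std_range:
  assumes T: "ssyt nu T" and p: "pshape nu"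
  shows "inj_on (standardize nu T) (cells nu)" "standardize nu T ` cells nu = {1..sum_list nu}"
proof -
  show inj: "inj_on (standardize nu T) (cells nu)"
  proof
    fix x y assume x: "x \<in> cells nu" and y: "y \<in> cells nu" and e: "standardize nu T x = standardize nu T y"
    show "x = y"
    proof (rule ccontr)
      assume "x \<noteq> y"
      then show False using ltT_total[OF T p x y] rank_mono[OF T x y] rank_mono[OF T y x] e by auto
    qed
  qed
  have sub: "standardize nu T ` cells nu \<subseteq> {1..sum_list nu}"
  proof
    fix v assume "v \<in> standardize nu T ` cells nu"
    then obtain x where x: "x \<in> cells nu" "v = standardize nu T x" by blast
    have "{y \<in> cells nu. ltT T y x} \<subset> cells nu" using x ltT_irrefl[of T x] by blast
    then have "card {y \<in> cells nu. ltT T y x} < card (cells nu)" by (rule psubset_card_mono[rotated]) simp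
    then show "v \<in> {1..sum_list nu}" using x by (simp add: std_eq card_cells)
  qed
  have "card (standardize nu T ` cells nu) = card {1..sum_list nu}"
    using card_image[OF inj] by (simp add: card_cells)
  then show "standardize nu T ` cells nu = {1..sum_list nu}"
    using sub by (intro card_subset_eq) auto
qed

lemma std_sytf:
  assumes T: "ssyt nu T" and p: "pshape nu"
  shows "sytf nu (standardize nu T)"
proof -
  let ?S = "standardize nu T"
  have "ssyt nu ?S"
    unfolding ssyt_def
  proof (intro conjI allI impI ballI)
    fix x assume "x \<notin> cells nu" then show "?S x = 0" by (simp add: std_eq)
  next
    fix x assume "x \<in> cells nu" then show "1 \<le> ?S x" by (simp add: std_eq)
  next
    fix r c assume rc: "(r, Suc c) \<in> cells nu"
    have c: "(r, c) \<in> cells nu" using rc by (auto simp: cells_def)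
    have "ltT T (r, c) (r, Suc c)" using T rc by (auto simp: ltT_def ssyt_def le_less)
    then show "?S (r, c) \<le> ?S (r, Suc c)" using rank_mono[OF T rc c] by simp
  next
    fix r c assume rc: "(Suc r, c) \<in> cells nu"
    have c: "(r, c) \<in> cells nu" using cell_down[OF p rc, of r c] by simp
    have "ltT T (r, c) (Suc r, c)" using T rc by (auto simp: ltT_def ssyt_def)
    then show "?S (r, c) < ?S (Suc r, c)" using rank_mono[OF T rc c] by simp
  qed
  then show ?thesis using std_range(2)[OF T p] by (simp add: sytf_def)
qed


definition dcount :: "nat list \<Rightarrow> (nat \<times> nat \<Rightarrow> nat) \<Rightarrow> nat \<Rightarrow> nat" where
  "dcount nu S k = card {i \<in> syt_Des nu S. i < k}"

lemma dcount_Suc: "dcount nu S (Suc k) = dcount nu S k + (if k \<in> syt_Des nu S then 1 else 0)"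
proof (cases "k \<in> syt_Des nu S")
  case True
  have e: "{i \<in> syt_Des nu S. i < Suc k} = insert k {i \<in> syt_Des nu S. i < k}"
    using True by auto
  have f: "finite {i \<in> syt_Des nu S. i < k}" by (rule finite_subset[of _ "{..<k}"]) auto
  show ?thesis unfolding dcount_def e using card_insert_disjoint[OF f] True by simp
next
  case False
  have e: "{i \<in> syt_Des nu S. i < Suc k} = {i \<in> syt_Des nu S. i < k}"
    using False less_Suc_eq by auto
  show ?thesis unfolding dcount_def e using False by simp
qed

lemma dcount_mono: "k \<le> k' \<Longrightarrow> dcount nu S k \<le> dcount nu S k'"
  unfolding dcount_def by (rule card_mono) auto

lemma dcount_strict:
  assumes j: "j \<in> syt_Des nu S" "k \<le> j" "j < k'"
  shows "dcount nu S k < dcount nu S k'"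
  unfolding dcount_def
proof (rule psubset_card_mono)
  show "finite {i \<in> syt_Des nu S. i < k'}" by (rule finite_subset[of _ "{..<k'}"]) auto
  have sub: "{i \<in> syt_Des nu S. i < k} \<subseteq> {i \<in> syt_Des nu S. i < k'}" using j by auto
  have "j \<in> {i \<in> syt_Des nu S. i < k'}" "j \<notin> {i \<in> syt_Des nu S. i < k}" using j by auto
  then show "{i \<in> syt_Des nu S. i < k} \<subset> {i \<in> syt_Des nu S. i < k'}" using sub by blast
qed

lemma dcount_zero: "dcount nu S (Suc 0) = 0"
proof -
  have "{i \<in> syt_Des nu S. i < Suc 0} = {}" by (auto simp: syt_Des_def)
  then show ?thesis unfolding dcount_def by (simp only: card.empty)
qed

lemma sytf_ex:
  assumes "sytf nu S" "1 \<le> v" "v \<le> sum_list nu"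
  shows "\<exists>x\<in>cells nu. S x = v"
proof -
  have "v \<in> S ` cells nu" using assms by (simp add: sytf_def)
  then show ?thesis by blast
qed

lemma sytf_pos: "sytf nu S \<Longrightarrow> x \<in> cells nu \<Longrightarrow> 1 \<le> S x"
  unfolding sytf_def ssyt_def by blast

lemma S_mono2:
  assumes S: "sytf nu S" and p: "pshape nu" and y: "y \<in> cells nu"
    and le: "fst x \<le> fst y" "snd x \<le> snd y"
  shows "S x \<le> S y"
proof -
  have ss: "ssyt nu S" using S by (simp add: sytf_def)
  have z: "(fst x, snd y) \<in> cells nu" using cell_down[OF p, of "fst y" "snd y" "fst x" "snd y"] y le by simp
  have "S x \<le> S (fst x, snd y)" using row_le[OF ss z, of "snd x"] le by simp
  moreover have "S (fst x, snd y) \<le> S y"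
    using col_lt[OF ss p, of "fst y" "snd y" "fst x"] y le by (cases "fst x < fst y") auto
  ultimately show ?thesis by simp
qed

lemma noD_step:
  assumes S: "sytf nu S" and p: "pshape nu" and x: "x \<in> cells nu" and y: "y \<in> cells nu"
    and e: "S y = Suc (S x)" and nd: "S x \<notin> syt_Des nu S"
  shows "fst y \<le> fst x" "snd x < snd y"
proof -
  show f: "fst y \<le> fst x"
  proof (rule ccontr)
    assume "\<not> fst y \<le> fst x"
    then have "S x \<in> syt_Des nu S" using x y e sytf_pos[OF S x] unfolding syt_Des_def
      by (intro CollectI conjI bexI[of _ x] bexI[of _ y]) auto
    then show False using nd by simp
  qed
  show "snd x < snd y"
  proof (rule ccontr)
    assume "\<not> snd x < snd y"
    then have le: "snd y \<le> snd x" by simp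
    have ss: "ssyt nu S" using S by (simp add: sytf_def)
    have z: "(fst y, snd x) \<in> cells nu" using cell_down[OF p, of "fst x" "snd x" "fst y" "snd x"] x f by simp
    have "S y \<le> S (fst y, snd x)" using row_le[OF ss z, of "snd y"] le by (cases y) simp
    moreover have "S (fst y, snd x) \<le> S x" using S_mono2[OF S p x, of "(fst y, snd x)"] f by simp
    ultimately show False using e by simp
  qed
qed

lemma noD_range:
  assumes S: "sytf nu S" and p: "pshape nu"
  shows "x \<in> cells nu \<Longrightarrow> y \<in> cells nu \<Longrightarrow> S y = S x + l \<Longrightarrow>
    (\<forall>j. S x \<le> j \<and> j < S x + l \<longrightarrow> j \<notin> syt_Des nu S) \<Longrightarrow>
    fst y \<le> fst x \<and> (0 < l \<longrightarrow> snd x < snd y)"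
proof (induction l arbitrary: y)
  case 0
  then have "x = y" using inj_onD[OF sytf_inj[OF S], of x y] by simp
  then show ?case by simp
next
  case (Suc l)
  have "1 \<le> S x + l" using sytf_pos[OF S Suc.prems(1)] by simp
  moreover have "S x + l \<le> sum_list nu" using sytf_le[OF S, of y] Suc.prems(3) by simp
  ultimately obtain z where z: "z \<in> cells nu" "S z = S x + l" using sytf_ex[OF S] by blast
  have ih: "fst z \<le> fst x \<and> (0 < l \<longrightarrow> snd x < snd z)"
    using Suc.IH[OF Suc.prems(1) z] Suc.prems(4) by simp
  have st: "fst y \<le> fst z" "snd z < snd y"
    using noD_step[OF S p z(1) Suc.prems(2)] Suc.prems(3,4) z(2) by auto
  have "l = 0 \<Longrightarrow> z = x" using inj_onD[OF sytf_inj[OF S], of z x] z Suc.prems(1) by simp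
  then show ?case using ih st by (cases "l = 0") auto
qed

definition destd :: "nat list \<Rightarrow> (nat \<times> nat \<Rightarrow> nat) \<Rightarrow> nat \<times> nat \<Rightarrow> nat" where
  "destd nu S x = (if x \<in> cells nu then Suc (dcount nu S (S x)) else 0)"

lemma destd_lt:
  assumes S: "sytf nu S" and p: "pshape nu" and x: "x \<in> cells nu" and y: "y \<in> cells nu"
    and l: "S y < S x"
  shows "ltT (destd nu S) y x"
proof -
  have m: "dcount nu S (S y) \<le> dcount nu S (S x)" using dcount_mono l by simp
  show ?thesis
  proof (cases "dcount nu S (S y) = dcount nu S (S x)")
    case True
    have nd: "\<forall>j. S y \<le> j \<and> j < S y + (S x - S y) \<longrightarrow> j \<notin> syt_Des nu S"
    proof (intro allI impI)
      fix j assume j: "S y \<le> j \<and> j < S y + (S x - S y)"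
      show "j \<notin> syt_Des nu S"
      proof
        assume "j \<in> syt_Des nu S"
        then have "dcount nu S (S y) < dcount nu S (S x)" using dcount_strict[of j nu S "S y" "S x"] j l by simp
        then show False using True by simp
      qed
    qed
    have "snd y < snd x" using noD_range[OF S p y x _ nd] l by simp
    then show ?thesis using True x y by (simp add: ltT_def destd_def)
  next
    case False
    then show ?thesis using m x y by (simp add: ltT_def destd_def)
  qed
qed

lemma destd_lt_iff:
  assumes S: "sytf nu S" and p: "pshape nu" and x: "x \<in> cells nu" and y: "y \<in> cells nu"
  shows "ltT (destd nu S) y x \<longleftrightarrow> S y < S x"
proof
  assume a: "ltT (destd nu S) y x"
  show "S y < S x"
  proof (rule ccontr)
    assume "\<not> S y < S x"
    then have "S x < S y \<or> S x = S y" by auto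
    then show False
    proof
      assume "S x < S y"
      then have "ltT (destd nu S) x y" using destd_lt[OF S p y x] by simp
      then show False using a ltT_trans[of "destd nu S" x y x] ltT_irrefl[of "destd nu S" x] by blast
    next
      assume "S x = S y"
      then have "x = y" using inj_onD[OF sytf_inj[OF S], of x y] x y by simp
      then show False using a ltT_irrefl[of "destd nu S" x] by simp
    qed
  qed
qed (rule destd_lt[OF S p x y])

lemma destd_ssyt:
  assumes S: "sytf nu S" and p: "pshape nu"
  shows "ssyt nu (destd nu S)"
  unfolding ssyt_def
proof (intro conjI allI impI ballI)
  have ss: "ssyt nu S" using S by (simp add: sytf_def)
  fix x assume "x \<notin> cells nu" then show "destd nu S x = 0" by (simp add: destd_def)
next
  fix x assume "x \<in> cells nu" then show "1 \<le> destd nu S x" by (simp add: destd_def)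
next
  have ss: "ssyt nu S" using S by (simp add: sytf_def)
  fix r c assume rc: "(r, Suc c) \<in> cells nu"
  have c: "(r, c) \<in> cells nu" using rc by (auto simp: cells_def)
  have "S (r, c) \<le> S (r, Suc c)" using ss rc by (simp add: ssyt_def)
  then show "destd nu S (r, c) \<le> destd nu S (r, Suc c)" using c rc dcount_mono by (simp add: destd_def)
next
  have ss: "ssyt nu S" using S by (simp add: sytf_def)
  fix r c assume rc: "(Suc r, c) \<in> cells nu"
  have c: "(r, c) \<in> cells nu" using cell_down[OF p rc, of r c] by simp
  have l: "S (r, c) < S (Suc r, c)" using ss rc by (simp add: ssyt_def)
  have "ltT (destd nu S) (r, c) (Suc r, c)" using destd_lt[OF S p rc c l] .
  then have "destd nu S (r, c) < destd nu S (Suc r, c) \<or> (destd nu S (r, c) = destd nu S (Suc r, c) \<and> c < c)"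
    by (simp add: ltT_def)
  then show "destd nu S (r, c) < destd nu S (Suc r, c)" by simp
qed

lemma destd_qyt:
  assumes S: "sytf nu S" and p: "pshape nu"
  shows "qyt nu (destd nu S)"
  unfolding qyt_def
proof (intro conjI allI impI destd_ssyt[OF S p])
  fix i assume i: "2 \<le> i" and ex: "\<exists>x\<in>cells nu. destd nu S x = i"
  then obtain x where x: "x \<in> cells nu" "destd nu S x = i" by blast
  let ?T = "destd nu S"
  let ?A = "{j \<in> syt_Des nu S. j < S x}"
  have dc: "card ?A = i - 1" using x by (simp add: destd_def dcount_def)
  have ne: "?A \<noteq> {}"
  proof
    assume "?A = {}"
    then have "card ?A = 0" by (simp only: card.empty)
    then show False using dc i by simp
  qed
  have fin: "finite ?A" by (rule finite_subset[of _ "{..<S x}"]) auto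
  define j where "j = Max ?A"
  have jA: "j \<in> ?A" using Max_in[OF fin ne] j_def by simp
  have jmax: "\<And>k. k \<in> ?A \<Longrightarrow> k \<le> j" using Max_ge[OF fin] j_def by simp
  obtain a b where ab: "a \<in> cells nu" "b \<in> cells nu" "S a = j" "S b = Suc j" "fst a < fst b"
    using jA unfolding syt_Des_def by blast
  have e: "{k \<in> syt_Des nu S. k < Suc j} = ?A"
  proof (intro set_eqI iffI)
    fix k assume "k \<in> {k \<in> syt_Des nu S. k < Suc j}"
    then show "k \<in> ?A" using jA by auto
  next
    fix k assume "k \<in> ?A"
    then show "k \<in> {k \<in> syt_Des nu S. k < Suc j}" using jmax[of k] by auto
  qed
  have d1: "dcount nu S (Suc j) = i - 1" using e dc by (simp add: dcount_def)
  have d0: "dcount nu S j = i - 2" using d1 dcount_Suc[of nu S j] jA by simp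
  have "?T b = i" using d1 ab i by (simp add: destd_def)
  moreover have "?T a = i - 1" using d0 ab i by (simp add: destd_def)
  ultimately show "\<exists>x\<in>cells nu. \<exists>y\<in>cells nu. ?T x = i \<and> ?T y = i - 1 \<and> fst y < fst x"
    using ab by blast
qed

lemma card_below:
  assumes S: "sytf nu S" and x: "x \<in> cells nu"
  shows "card {y \<in> cells nu. S y < S x} = S x - 1"
proof -
  have inj: "inj_on S {y \<in> cells nu. S y < S x}" using sytf_inj[OF S] by (rule inj_on_subset) auto
  have "S ` {y \<in> cells nu. S y < S x} = {1..<S x}"
  proof (intro set_eqI iffI)
    fix v assume "v \<in> S ` {y \<in> cells nu. S y < S x}"
    then show "v \<in> {1..<S x}" using sytf_pos[OF S] by auto
  next
    fix v assume v: "v \<in> {1..<S x}"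
    then have "v \<le> sum_list nu" using sytf_le[OF S, of x] by simp
    then have "\<exists>y\<in>cells nu. S y = v" using sytf_ex[OF S] v by simp
    then obtain y where "y \<in> cells nu" "S y = v" by blast
    then show "v \<in> S ` {y \<in> cells nu. S y < S x}" using v by auto
  qed
  then show ?thesis using card_image[OF inj] by simp
qed

lemma std_destd:
  assumes S: "sytf nu S" and p: "pshape nu"
  shows "standardize nu (destd nu S) = S"
proof
  fix x
  show "standardize nu (destd nu S) x = S x"
  proof (cases "x \<in> cells nu")
    case True
    have "{y \<in> cells nu. ltT (destd nu S) y x} = {y \<in> cells nu. S y < S x}"
      using destd_lt_iff[OF S p True] by auto
    then show ?thesis using True card_below[OF S True] sytf_pos[OF S True] by (simp add: std_eq)
  next
    case False
    then show ?thesis using S ssyt_out[of nu S x] by (simp add: std_eq sytf_def)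
  qed
qed

lemma qyt_destd:
  assumes Q: "qyt nu T" and p: "pshape nu"
  shows "destd nu (standardize nu T) = T"
proof -
  have T: "ssyt nu T" using Q by (simp add: qyt_def)
  let ?S = "standardize nu T"
  have S: "sytf nu ?S" using std_sytf[OF T p] .
  have lt: "\<And>x y. x \<in> cells nu \<Longrightarrow> y \<in> cells nu \<Longrightarrow> ?S y < ?S x \<longleftrightarrow> ltT T y x"
    using std_lt_iff[OF T p] by blast
  have inj: "inj_on ?S (cells nu)" using sytf_inj[OF S] .
  have qy: "\<And>i. 2 \<le> i \<Longrightarrow> (\<exists>x\<in>cells nu. T x = i) \<Longrightarrow>
      (\<exists>x\<in>cells nu. \<exists>y\<in>cells nu. T x = i \<and> T y = i - 1 \<and> fst x > fst y)"
    using Q by (simp add: qyt_def)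
  have Tpos: "\<And>x. x \<in> cells nu \<Longrightarrow> 1 \<le> T x" using T by (simp add: ssyt_def)
  have main: "\<forall>x\<in>cells nu. ?S x = k \<longrightarrow> T x = Suc (dcount nu ?S k)" for k
  proof (induction k)
    case 0
    then show ?case using sytf_pos[OF S] by fastforce
  next
    case (Suc k)
    show ?case
    proof (intro ballI impI)
      fix x assume x: "x \<in> cells nu" and Sx: "?S x = Suc k"
      show "T x = Suc (dcount nu ?S (Suc k))"
      proof (cases k)
        case 0
        have "T x = 1"
        proof (rule ccontr)
          assume "T x \<noteq> 1"
          then have "2 \<le> T x" using Tpos[OF x] by simp
          then obtain a b where ab: "a \<in> cells nu" "b \<in> cells nu" "T b = T x" "T a = T x - 1"
            using qy[of "T x"] x by blast
          have "ltT T a x" using ab \<open>2 \<le> T x\<close> by (simp add: ltT_def)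
          then have "?S a < ?S x" using lt[OF x ab(1)] by simp
          then show False using Sx 0 sytf_pos[OF S ab(1)] by simp
        qed
        then show ?thesis using 0 dcount_zero by simp
      next
        case (Suc k')
        have "1 \<le> k" "k \<le> sum_list nu" using Suc sytf_le[OF S, of x] Sx by auto
        then obtain y where y: "y \<in> cells nu" "?S y = k" using sytf_ex[OF S] by blast
        have Ty: "T y = Suc (dcount nu ?S k)" using Suc.IH y by blast
        have lyx: "ltT T y x" using lt[OF x y(1)] y(2) Sx by simp
        show ?thesis
        proof (cases "T y = T x")
          case True
          then have sn: "snd y < snd x" using lyx by (simp add: ltT_def)
          have "k \<notin> syt_Des nu ?S"
          proof
            assume "k \<in> syt_Des nu ?S"
            then obtain a b where ab: "a \<in> cells nu" "b \<in> cells nu" "?S a = k" "?S b = Suc k" "fst a < fst b"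
              unfolding syt_Des_def by blast
            have "a = y" using inj_onD[OF inj, of a y] ab y by simp
            moreover have "b = x" using inj_onD[OF inj, of b x] ab x Sx by simp
            ultimately have "fst y < fst x" using ab by simp
            then show False using hstrip[OF T p x y(1) True sn] by simp
          qed
          then show ?thesis using Ty True dcount_Suc[of nu ?S k] by simp
        next
          case False
          then have Tlt: "T y < T x" using lyx by (simp add: ltT_def)
          have gap: "\<And>z. z \<in> cells nu \<Longrightarrow> \<not> (T y < T z \<and> T z < T x)"
          proof
            fix z assume z: "z \<in> cells nu" "T y < T z \<and> T z < T x"
            then have "?S y < ?S z" "?S z < ?S x" using lt[OF z(1) y(1)] lt[OF x z(1)]
              by (auto simp: ltT_def)
            then show False using y(2) Sx by simp
          qed
          have "2 \<le> T x" using Tlt Tpos[OF y(1)] by simp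
          then obtain b a where ab: "b \<in> cells nu" "a \<in> cells nu" "T b = T x" "T a = T x - 1" "fst a < fst b"
            using qy[of "T x"] x by blast
          have Ta: "T a = T y" using gap[OF ab(2)] ab(4) Tlt by simp
          have fb: "fst b \<le> fst x"
          proof (cases "b = x")
            case False
            have "?S y < ?S b" using lt[OF ab(1) y(1)] ab(3) Tlt by (simp add: ltT_def)
            then have "?S x \<le> ?S b" using y(2) Sx by simp
            moreover have "?S x \<noteq> ?S b" using inj_onD[OF inj, of x b] False ab(1) x by auto
            ultimately have "ltT T x b" using lt[OF ab(1) x] by simp
            then have "snd x < snd b" using ab(3) by (simp add: ltT_def)
            then show ?thesis using hstrip[OF T p ab(1) x] ab(3) by simp
          qed simp
          have fa: "fst y \<le> fst a"
          proof (cases "a = y")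
            case False
            have "?S a < ?S x" using lt[OF x ab(2)] ab(4) \<open>2 \<le> T x\<close> by (simp add: ltT_def)
            then have "?S a \<le> ?S y" using y(2) Sx by simp
            moreover have "?S a \<noteq> ?S y" using inj_onD[OF inj, of a y] False ab(2) y(1) by auto
            ultimately have "ltT T a y" using lt[OF y(1) ab(2)] by simp
            then have "snd a < snd y" using Ta by (simp add: ltT_def)
            then show ?thesis using hstrip[OF T p y(1) ab(2)] Ta by simp
          qed simp
          have "k \<in> syt_Des nu ?S"
            unfolding syt_Des_def using y x Sx fa fb ab(5) \<open>1 \<le> k\<close>
            by (intro CollectI conjI bexI[of _ y] bexI[of _ x]) auto
          then show ?thesis using Ty Ta ab(4) Tlt dcount_Suc[of nu ?S k] by simp
        qed
      qed
    qed
  qed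
  show ?thesis
  proof
    fix x
    show "destd nu ?S x = T x"
    proof (cases "x \<in> cells nu")
      case True
      then show ?thesis using main[of "?S x"] by (simp add: destd_def)
    next
      case False
      then show ?thesis using ssyt_out[OF T False] by (simp add: destd_def)
    qed
  qed
qed

lemma std_bij: "nu \<in> partitions_of m \<Longrightarrow> bij_betw (standardize nu) (QYT nu) {S. sytf nu S}"
proof -
  assume "nu \<in> partitions_of m"
  then have p: "pshape nu" by (rule partition_pshape)
  show ?thesis
  proof (rule bij_betw_imageI)
    show "inj_on (standardize nu) (QYT nu)"
    proof (rule inj_onI)
      fix T1 T2 assume a: "T1 \<in> QYT nu" "T2 \<in> QYT nu" and e: "standardize nu T1 = standardize nu T2"
      have q: "qyt nu T1" "qyt nu T2" using a unfolding QYT_def by simp_all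
      have "T1 = destd nu (standardize nu T1)" using qyt_destd[OF q(1) p] by simp
      also have "\<dots> = destd nu (standardize nu T2)" using e by simp
      also have "\<dots> = T2" using qyt_destd[OF q(2) p] by simp
      finally show "T1 = T2" .
    qed
    show "standardize nu ` QYT nu = {S. sytf nu S}"
    proof (intro set_eqI iffI)
      fix S assume "S \<in> standardize nu ` QYT nu"
      then obtain T where T: "T \<in> QYT nu" "S = standardize nu T" by blast
      have "qyt nu T" using T(1) unfolding QYT_def by simp
      then have "ssyt nu T" unfolding qyt_def by simp
      then show "S \<in> {S. sytf nu S}" using std_sytf[OF _ p] T(2) by simp
    next
      fix S assume "S \<in> {S. sytf nu S}"
      then have S: "sytf nu S" by simp
      have "destd nu S \<in> QYT nu" using destd_qyt[OF S p] unfolding QYT_def by simp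
      moreover have "S = standardize nu (destd nu S)" using std_destd[OF S p] by simp
      ultimately show "S \<in> standardize nu ` QYT nu" by blast
    qed
  qed
qed


lemma rowbound:
  assumes v: "valid P" and pos: "\<forall>z\<in>set (concat P). 1 \<le> z"
  shows "r < length P \<Longrightarrow> c < length (P ! r) \<Longrightarrow> Suc r \<le> P ! r ! c"
proof (induction r arbitrary: c)
  case 0
  then show ?case using pos by (auto, metis nth_mem)
next
  case (Suc r)
  have "sb (P ! r) (P ! Suc r)" using v Suc.prems by (simp add: valid_def)
  then have "c < length (P ! r)" "P ! r ! c < P ! Suc r ! c" using Suc.prems by (auto simp: sb_iff)
  moreover have "Suc r \<le> P ! r ! c" using Suc.IH[OF _ \<open>c < length (P ! r)\<close>] Suc.prems by simp
  ultimately show ?case by simp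
qed

lemma filter_replicate_mset: "filter_mset f (replicate_mset m x) = (if f x then replicate_mset m x else {#})"
  by (induction m) auto

lemma size_filter_Mla_aux:
  "size (filter_mset f (\<Sum>k<n. replicate_mset (h k) (Suc k))) = (\<Sum>k<n. if f (Suc k) then h k else 0)"
  by (induction n) (auto simp: filter_replicate_mset)

lemma sum_take: "sum_list (take i xs) = (\<Sum>k<length xs. if k < i then xs ! k else (0::nat))"
proof -
  have "sum_list (take i xs) = (\<Sum>k<min i (length xs). xs ! k)"
    by (simp add: sum_list_sum_nth atLeast0LessThan min.commute)
  also have "\<dots> = (\<Sum>k<length xs. if k < i then xs ! k else 0)"
    by (rule sum.mono_neutral_cong_left) auto
  finally show ?thesis .
qed

lemma Pset_dom:
  assumes P: "P \<in> Pset la nu"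
  shows "dominates nu la"
  unfolding dominates_def
proof
  fix i
  have v: "valid P" and m: "mset (concat P) = Mla la" and sh: "map length P = nu"
    using P by (auto simp: Pset_def)
  have pos: "\<forall>z\<in>set (concat P). 1 \<le> z"
  proof
    fix z assume "z \<in> set (concat P)"
    then have "z \<in># Mla la" using m by (metis set_mset_mset)
    then show "1 \<le> z" by (rule Mla_pos)
  qed
  have "sum_list (take i la) = (\<Sum>k<length la. if Suc k \<le> i then la ! k else 0)"
    unfolding sum_take by (rule sum.cong) auto
  also have "\<dots> = size (filter_mset (\<lambda>z. z \<le> i) (Mla la))"
    unfolding Mla_def size_filter_Mla_aux ..
  also have "\<dots> = length (filter (\<lambda>z. z \<le> i) (concat P))"
    using m[symmetric] by (simp flip: size_mset)
  also have "\<dots> = (\<Sum>r<length P. length (filter (\<lambda>z. z \<le> i) (P ! r)))"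
    by (simp add: filter_concat length_concat sum_list_sum_nth atLeast0LessThan comp_def)
  also have "\<dots> \<le> (\<Sum>r<length P. if r < i then length (P ! r) else 0)"
  proof (rule sum_mono)
    fix r assume r: "r \<in> {..<length P}"
    show "length (filter (\<lambda>z. z \<le> i) (P ! r)) \<le> (if r < i then length (P ! r) else 0)"
    proof (cases "r < i")
      case False
      have "filter (\<lambda>z. z \<le> i) (P ! r) = []"
      proof (rule filter_False, intro ballI)
        fix z assume "z \<in> set (P ! r)"
        then obtain c where "c < length (P ! r)" "z = P ! r ! c" by (metis in_set_conv_nth)
        then show "\<not> z \<le> i" using rowbound[OF v pos, of r c] r False by simp
      qed
      then show ?thesis by simp
    qed simp
  qed
  also have "\<dots> = sum_list (take i nu)"
    unfolding sum_take sh[symmetric] by (intro sum.cong) auto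
  finally show "sum_list (take i la) \<le> sum_list (take i nu)" .
qed

lemma length_le_sum: "0 \<notin> set xs \<Longrightarrow> length xs \<le> sum_list (xs :: nat list)"
  by (induction xs) auto

lemma finite_partitions: "finite (partitions_of n)"
proof (rule finite_subset)
  show "partitions_of n \<subseteq> {xs. set xs \<subseteq> {..n} \<and> length xs \<le> n}"
    using length_le_sum member_le_sum_list by (fastforce simp: partitions_of_def)
  show "finite {xs. set xs \<subseteq> {..n} \<and> length xs \<le> n}"
    by (rule finite_lists_length_le) simp
qed

lemma valid_partition:
  assumes "valid P"
  shows "map length P \<in> partitions_of (length (concat P))"
proof -
  have "sorted_wrt (\<ge>) (map length P)"
    using assms valid_decr[OF assms]
    by (subst sorted_wrt_iff_nth_Suc_transp) (auto simp: decr_def transp_def)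
  moreover have "0 \<notin> set (map length P)" using assms by (auto simp: valid_def)
  ultimately show ?thesis by (simp add: partitions_of_def length_concat)
qed


lemma size_Mla: "size (Mla la) = sum_list la"
proof -
  have "size (Mla la) = size (filter_mset (\<lambda>_. True) (Mla la))" by simp
  also have "\<dots> = (\<Sum>k<length la. la ! k)" unfolding Mla_def size_filter_Mla_aux by simp
  finally show ?thesis by (simp add: sum_list_sum_nth atLeast0LessThan)
qed

theorem mainTheorem9:
  fixes la :: "nat list" and n :: nat and q t :: "'a :: comm_ring_1"
  assumes "la \<in> partitions_of n"
  shows "(\<Sum>w\<in>words la. q ^ word_maj w * t ^ word_des w) =
         (\<Sum>nu\<in>{nu \<in> partitions_of n. dominates nu la}.
             of_nat (kostka nu la) * (\<Sum>T\<in>QYT nu. q ^ tab_maj nu T * t ^ tab_des nu T))"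
proof -
  define M where "M = Mla la"
  define W where "W = words la"
  have W: "W = {w. mset w = M}" using words_Mla M_def W_def by simp
  have sM: "size M = n" using assms size_Mla M_def by (simp add: partitions_of_def)
  have lenW: "\<And>w. w \<in> W \<Longrightarrow> length w = n" using W sM by (metis mem_Collect_eq size_mset)
  have finW: "finite W"
  proof (rule finite_subset)
    show "W \<subseteq> {w. set w \<subseteq> {..length la} \<and> length w = n}"
    proof
      fix w assume w: "w \<in> W"
      have "set w \<subseteq> {..length la}"
      proof
        fix z assume "z \<in> set w"
        then have "z \<in># M" using w W by (metis mem_Collect_eq set_mset_mset)
        then show "z \<in> {..length la}" using Mla_le M_def by simp
      qed
      then show "w \<in> {w. set w \<subseteq> {..length la} \<and> length w = n}" using lenW[OF w] by simp
    qed
    show "finite {w. set w \<subseteq> {..length la} \<and> length w = n}" by (rule finite_lists_length_eq) simp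
  qed
  define g :: "nat set \<Rightarrow> 'a" where "g D = q ^ (\<Sum>D) * t ^ card D" for D
  define h :: "nat list list \<times> (nat \<times> nat \<Rightarrow> nat) \<Rightarrow> 'a"
    where "h x = g (syt_Des (map length (fst x)) (snd x))" for x
  define Tr where "Tr = rsk ` W"
  have inj: "inj_on rsk W" by (rule inj_onI) (use rsk_inj lenW in metis)
  have finTr: "finite Tr" using finW Tr_def by simp
  have Tr_eq: "Tr = {(P, S). valid P \<and> mset (concat P) = M \<and> sytf (map length P) S}"
  proof (intro set_eqI iffI)
    fix x assume "x \<in> Tr"
    then obtain w where w: "w \<in> W" "x = rsk w" using Tr_def by blast
    obtain P S where r: "rsk w = (P, S)" by (cases "rsk w") auto
    show "x \<in> {(P, S). valid P \<and> mset (concat P) = M \<and> sytf (map length P) S}"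
      using INV_facts[OF r] w r W by auto
  next
    fix x assume "x \<in> {(P, S). valid P \<and> mset (concat P) = M \<and> sytf (map length P) S}"
    then obtain P S where x: "x = (P, S)" "valid P" "mset (concat P) = M" "sytf (map length P) S"
      by blast
    obtain w where w: "rsk w = (P, S)" using rsk_surj[OF x(2,4)] by blast
    have wW: "w \<in> W" using INV_facts(2)[OF w] x(3) W by simp
    show "x \<in> Tr" unfolding Tr_def x(1) w[symmetric] using wW by (rule imageI)
  qed
  have step1: "(\<Sum>w\<in>words la. q ^ word_maj w * t ^ word_des w) = (\<Sum>x\<in>Tr. h x)"
  proof -
    have "(\<Sum>x\<in>Tr. h x) = (\<Sum>w\<in>W. h (rsk w))"
      unfolding Tr_def by (rule sum.reindex[OF inj, unfolded comp_def])
    also have "\<dots> = (\<Sum>w\<in>W. q ^ word_maj w * t ^ word_des w)"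
    proof (rule sum.cong)
      fix w assume "w \<in> W"
      obtain P S where r: "rsk w = (P, S)" by (cases "rsk w") auto
      show "h (rsk w) = q ^ word_maj w * t ^ word_des w"
        using rsk_Des[OF r] r by (simp add: h_def g_def word_maj_def word_des_def)
    qed simp
    finally show ?thesis using W_def by simp
  qed
  have sub: "(\<lambda>x. map length (fst x)) ` Tr \<subseteq> partitions_of n"
  proof
    fix nu assume "nu \<in> (\<lambda>x. map length (fst x)) ` Tr"
    then obtain P S where "(P, S) \<in> Tr" "nu = map length P" by auto
    then have "valid P" "mset (concat P) = M" "nu = map length P" using Tr_eq by auto
    then show "nu \<in> partitions_of n" using valid_partition[of P] sM by (metis size_mset)
  qed
  have step2: "(\<Sum>x\<in>Tr. h x) = (\<Sum>nu\<in>partitions_of n.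
      (\<Sum>x\<in>{x \<in> Tr. map length (fst x) = nu}. h x))"
    by (rule sum.group[OF finTr finite_partitions sub, symmetric])
  have step3: "(\<Sum>x\<in>{x \<in> Tr. map length (fst x) = nu}. h x) =
      of_nat (kostka nu la) * (\<Sum>T\<in>QYT nu. q ^ tab_maj nu T * t ^ tab_des nu T)"
    if nu: "nu \<in> partitions_of n" for nu
  proof -
    have e: "{x \<in> Tr. map length (fst x) = nu} = Pset la nu \<times> {S. sytf nu S}"
      unfolding Tr_eq Pset_def M_def by auto
    have "(\<Sum>x\<in>{x \<in> Tr. map length (fst x) = nu}. h x) =
        (\<Sum>P\<in>Pset la nu. \<Sum>S\<in>{S. sytf nu S}. h (P, S))"
      unfolding e by (simp add: sum.cartesian_product case_prod_unfold)
    also have "\<dots> = (\<Sum>P\<in>Pset la nu. \<Sum>S\<in>{S. sytf nu S}. g (syt_Des nu S))"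
      by (rule sum.cong) (auto simp: h_def Pset_def)
    also have "\<dots> = of_nat (card (Pset la nu)) * (\<Sum>S\<in>{S. sytf nu S}. g (syt_Des nu S))"
      by simp
    also have "(\<Sum>S\<in>{S. sytf nu S}. g (syt_Des nu S)) =
        (\<Sum>T\<in>QYT nu. g (syt_Des nu (standardize nu T)))"
      by (rule sum.reindex_bij_betw[OF std_bij[OF nu], symmetric])
    also have "\<dots> = (\<Sum>T\<in>QYT nu. q ^ tab_maj nu T * t ^ tab_des nu T)"
      by (simp add: g_def tab_maj_def tab_des_def)
    finally show ?thesis using kostka_Pset[OF nu] by simp
  qed
  have step4: "(\<Sum>nu\<in>partitions_of n. of_nat (kostka nu la) *
        (\<Sum>T\<in>QYT nu. q ^ tab_maj nu T * t ^ tab_des nu T)) =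
      (\<Sum>nu\<in>{nu \<in> partitions_of n. dominates nu la}. of_nat (kostka nu la) *
        (\<Sum>T\<in>QYT nu. q ^ tab_maj nu T * t ^ tab_des nu T))"
  proof (rule sum.mono_neutral_right[OF finite_partitions])
    show "{nu \<in> partitions_of n. dominates nu la} \<subseteq> partitions_of n" by auto
    show "\<forall>nu\<in>partitions_of n - {nu \<in> partitions_of n. dominates nu la}.
        of_nat (kostka nu la) * (\<Sum>T\<in>QYT nu. q ^ tab_maj nu T * t ^ tab_des nu T) = 0"
    proof
      fix nu assume nu: "nu \<in> partitions_of n - {nu \<in> partitions_of n. dominates nu la}"
      then have "Pset la nu = {}" using Pset_dom by auto
      then have "kostka nu la = 0" using kostka_Pset[of nu n la] nu by simp
      then show "of_nat (kostka nu la) * (\<Sum>T\<in>QYT nu. q ^ tab_maj nu T * t ^ tab_des nu T) = 0"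
        by simp
    qed
  qed
  show ?thesis using step1 step2 step3 step4 by simp
qed


end
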